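(* Let $\theta=[\varphi^T,\mu^T]^T$ and $\theta_0=[\varphi_0^T,\mu_0^T]^T$ belong to $\mathscr{D}(p,r)$ (so $\varphi=\mathrm{vec}(A)$, $\varphi_0=\mathrm{vec}(A_0)$ with $\|A\|_2<1$, $\|A_0\|_2<1$). Then there exists $R(\theta,\theta_0)\in\mathbb{R}^{p\times p}$ such that $$\mathrm{vec}\{\Sigma(\theta)-\Sigma_0\}=D\Sigma(\theta_0)(\theta-\theta_0)+\mathrm{vec}\{R(\theta,\theta_0)\},\qquad \|R(\theta,\theta_0)\|_F\le 16(1+\|M_0\|_2)\|\theta-\theta_0\|_2^2 .$$ In matrix form, with $C_0=(I_p-X_{\varphi_0})^{-1}$, $$\Sigma(\theta)-\Sigma_0=2C_0(X_\varphi-X_{\varphi_0})C_0^T\Sigma_0-2\Sigma_0C_0(X_\varphi-X_{\varphi_0})C_0^T+U_0\{M(\mu)-M_0\}U_0^T+R(\theta,\theta_0).$$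
   Context: Fix integers $1\le r\le p$. For $A\in\mathbb{R}^{(p-r)\times r}$ write $\varphi=\mathrm{vec}(A)$ (column-stacking), $X_\varphi=\begin{bmatrix}0_{r\times r}&-A^{T}\\ A&0\end{bmatrix}$, $I_{p\times r}=\begin{bmatrix}I_r\\0\end{bmatrix}$, and let $U(\varphi)=(I_p+X_\varphi)(I_p-X_\varphi)^{-1}I_{p\times r}$ be the Cayley parameterization, with derivative $DU(\varphi)=2[I_{p\times r}^T(I_p-X_\varphi)^{-T}\otimes(I_p-X_\varphi)^{-1}]\Gamma$, $\Gamma=(I_{p^2}-K_{pp})(\Theta_1^T\otimes\Theta_2^T)$, $\Theta_1=I_{p\times r}^T$, $\Theta_2=[0_{(p-r)\times r},I_{p-r}]$; $K_{pq}$ is the commutation matrix ($\mathrm{vec}(M^T)=K_{pq}\mathrm{vec}(M)$). For a symmetric $r\times r$ matrix $M$, $\mathrm{vech}(M)\in\mathbb{R}^{r(r+1)/2}$ stacks the on-and-below-diagonal entries column by column, $M(\mu)$ is the symmetric matrix with $\mathrm{vech}(M(\mu))=\mu$, and $\mathbb{D}_r$ is the duplication matrix ($\mathrm{vec}(M)=\mathbb{D}_r\mathrm{vech}(M)$). Let $\mathscr{D}(p,r)=\{\theta=[\mathrm{vec}(A)^T,\mu^T]^T: A\in\mathbb{R}^{(p-r)\times r},\|A\|_2<1,\ \mu\in\mathbb{R}^{r(r+1)/2}\}$ and $\Sigma(\theta)=U(\varphi)M(\mu)U(\varphi)^T$. Define $D_\varphi\Sigma(\theta)=(I_{p^2}+K_{pp})\{U(\varphi)M(\mu)\otimes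 I_p\}DU(\varphi)$, $D_\mu\Sigma(\theta)=\{U(\varphi)\otimes U(\varphi)\}\mathbb{D}_r$, $D\Sigma(\theta)=[D_\varphi\Sigma(\theta),\,D_\mu\Sigma(\theta)]$. For the reference point $\theta_0=[\mathrm{vec}(A_0)^T,\mu_0^T]^T$ write $U_0=U(\varphi_0)$, $M_0=M(\mu_0)$, $\Sigma_0=\Sigma(\theta_0)$. *)

theory Defs
  imports Complex_Main "Jordan_Normal_Form.Matrix"
begin

definition vecm :: "real mat \<Rightarrow> real vec" where
  "vecm M = vec (dim_row M * dim_col M) (\<lambda>k. M $$ (k mod dim_row M, k div dim_row M))"

definition kron :: "real mat \<Rightarrow> real mat \<Rightarrow> real mat" where
  "kron A B = mat (dim_row A * dim_row B) (dim_col A * dim_col B)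
     (\<lambda>(i,j). A $$ (i div dim_row B, j div dim_col B) * B $$ (i mod dim_row B, j mod dim_col B))"

text \<open>Commutation matrix K_pq: vec(M^T) = K_pq vec(M) for every p x q matrix M.\<close>
definition commut :: "nat \<Rightarrow> nat \<Rightarrow> real mat" where
  "commut p q = mat (p*q) (p*q) (\<lambda>(i,j). if i = j div p + q * (j mod p) then 1 else 0)"

definition vech :: "real mat \<Rightarrow> real vec" where
  "vech M = vec_of_list (concat (map (\<lambda>j. map (\<lambda>i. M $$ (i,j)) [j..<dim_row M]) [0..<dim_row M]))"

definition symm :: "nat \<Rightarrow> real mat \<Rightarrow> bool" where
  "symm r M \<longleftrightarrow> M \<in> carrier_mat r r \<and> transpose_mat M = M"

definition Mmu :: "nat \<Rightarrow> real vec \<Rightarrow> real mat" where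
  "Mmu r \<mu> = (THE M. symm r M \<and> vech M = \<mu>)"

definition dupl :: "nat \<Rightarrow> real mat" where
  "dupl r = (THE D. D \<in> carrier_mat (r*r) (r*(r+1) div 2) \<and> (\<forall>M. symm r M \<longrightarrow> vecm M = D *\<^sub>v vech M))"

definition minv :: "real mat \<Rightarrow> real mat" where
  "minv A = (SOME B. B \<in> carrier_mat (dim_row A) (dim_row A) \<and> A * B = 1\<^sub>m (dim_row A) \<and> B * A = 1\<^sub>m (dim_row A))"

definition hcat :: "real mat \<Rightarrow> real mat \<Rightarrow> real mat" where
  "hcat A B = mat (dim_row A) (dim_col A + dim_col B)
     (\<lambda>(i,j). if j < dim_col A then A $$ (i,j) else B $$ (i, j - dim_col A))"

definition vnorm :: "real vec \<Rightarrow> real" where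
  "vnorm v = sqrt (\<Sum>i<dim_vec v. (v $ i)^2)"

definition fnorm :: "real mat \<Rightarrow> real" where
  "fnorm M = sqrt (\<Sum>i<dim_row M. \<Sum>j<dim_col M. (M $$ (i,j))^2)"

definition snorm :: "real mat \<Rightarrow> real" where
  "snorm M = Sup {vnorm (M *\<^sub>v x) | x. x \<in> carrier_vec (dim_col M) \<and> vnorm x = 1}"

definition Ipr :: "nat \<Rightarrow> nat \<Rightarrow> real mat" where
  "Ipr p r = mat p r (\<lambda>(i,j). if i = j then 1 else 0)"

definition Xphi :: "nat \<Rightarrow> nat \<Rightarrow> real mat \<Rightarrow> real mat" where
  "Xphi p r A = four_block_mat (0\<^sub>m r r) (- transpose_mat A) A (0\<^sub>m (p-r) (p-r))"

definition Ucay :: "nat \<Rightarrow> nat \<Rightarrow> real mat \<Rightarrow> real mat" where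
  "Ucay p r A = (1\<^sub>m p + Xphi p r A) * minv (1\<^sub>m p - Xphi p r A) * Ipr p r"

definition Theta1 :: "nat \<Rightarrow> nat \<Rightarrow> real mat" where
  "Theta1 p r = transpose_mat (Ipr p r)"

definition Theta2 :: "nat \<Rightarrow> nat \<Rightarrow> real mat" where
  "Theta2 p r = mat (p-r) p (\<lambda>(i,j). if j = r + i then 1 else 0)"

definition Gam :: "nat \<Rightarrow> nat \<Rightarrow> real mat" where
  "Gam p r = (1\<^sub>m (p*p) - commut p p) * kron (transpose_mat (Theta1 p r)) (transpose_mat (Theta2 p r))"

definition DU :: "nat \<Rightarrow> nat \<Rightarrow> real mat \<Rightarrow> real mat" where
  "DU p r A = 2 \<cdot>\<^sub>m (kron (transpose_mat (Ipr p r) * transpose_mat (minv (1\<^sub>m p - Xphi p r A)))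
                          (minv (1\<^sub>m p - Xphi p r A)) * Gam p r)"

definition Sigma :: "nat \<Rightarrow> nat \<Rightarrow> real mat \<Rightarrow> real vec \<Rightarrow> real mat" where
  "Sigma p r A \<mu> = Ucay p r A * Mmu r \<mu> * transpose_mat (Ucay p r A)"

definition DphiSigma :: "nat \<Rightarrow> nat \<Rightarrow> real mat \<Rightarrow> real vec \<Rightarrow> real mat" where
  "DphiSigma p r A \<mu> = (1\<^sub>m (p*p) + commut p p) * kron (Ucay p r A * Mmu r \<mu>) (1\<^sub>m p) * DU p r A"

definition DmuSigma :: "nat \<Rightarrow> nat \<Rightarrow> real mat \<Rightarrow> real mat" where
  "DmuSigma p r A = kron (Ucay p r A) (Ucay p r A) * dupl r"

definition DSigma :: "nat \<Rightarrow> nat \<Rightarrow> real mat \<Rightarrow> real vec \<Rightarrow> real mat" where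
  "DSigma p r A \<mu> = hcat (DphiSigma p r A \<mu>) (DmuSigma p r A)"

definition theta :: "real mat \<Rightarrow> real vec \<Rightarrow> real vec" where
  "theta A \<mu> = vecm A @\<^sub>v \<mu>"

definition inD :: "nat \<Rightarrow> nat \<Rightarrow> real mat \<Rightarrow> real vec \<Rightarrow> bool" where
  "inD p r A \<mu> \<longleftrightarrow> A \<in> carrier_mat (p-r) r \<and> snorm A < 1 \<and> \<mu> \<in> carrier_vec (r*(r+1) div 2)"

end

theory Submission
  imports Defs "HOL-Analysis.L2_Norm" "Jordan_Normal_Form.Determinant"
begin


lemma vnorm_L2: "vnorm v = L2_set (\<lambda>i. v $ i) {..<dim_vec v}"
  unfolding vnorm_def L2_set_def by simp

lemma vnorm_nonneg[simp]: "0 \<le> vnorm v"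
  unfolding vnorm_def by (simp add: sum_nonneg)

lemma vnorm_sq: "(vnorm v)^2 = v \<bullet> v"
  unfolding vnorm_def scalar_prod_def by (simp add: sum_nonneg power2_eq_square atLeast0LessThan)

lemma vnorm_sq': "(vnorm v)^2 = (\<Sum>i<dim_vec v. (v$i)^2)"
  unfolding vnorm_def by (simp add: sum_nonneg)

lemma cauchy_schwarz_vec:
  assumes "dim_vec v = dim_vec w"
  shows "\<bar>v \<bullet> w\<bar> \<le> vnorm v * vnorm w"
proof -
  have "\<bar>v \<bullet> w\<bar> = \<bar>\<Sum>i<dim_vec w. v$i * w$i\<bar>" unfolding scalar_prod_def by (simp add: atLeast0LessThan)
  also have "\<dots> \<le> (\<Sum>i<dim_vec w. \<bar>v$i\<bar> * \<bar>w$i\<bar>)" by (rule order_trans[OF sum_abs]) (simp add: abs_mult)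
  also have "\<dots> \<le> L2_set (\<lambda>i. v $ i) {..<dim_vec w} * L2_set (\<lambda>i. w $ i) {..<dim_vec w}"
    by (rule L2_set_mult_ineq)
  finally show ?thesis using assms by (simp add: vnorm_L2)
qed

lemma vnorm_add_le:
  assumes "dim_vec v = dim_vec w"
  shows "vnorm (v + w) \<le> vnorm v + vnorm w"
proof -
  have "vnorm (v + w) = L2_set (\<lambda>i. v $ i + w $ i) {..<dim_vec w}"
    unfolding vnorm_L2 by (rule L2_set_cong) (use assms in auto)
  also have "\<dots> \<le> L2_set (\<lambda>i. v $ i) {..<dim_vec w} + L2_set (\<lambda>i. w $ i) {..<dim_vec w}"
    by (rule L2_set_triangle_ineq)
  finally show ?thesis using assms by (simp add: vnorm_L2)
qed

lemma vnorm_smult: "vnorm (c \<cdot>\<^sub>v v) = \<bar>c\<bar> * vnorm v"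
proof -
  have "vnorm (c \<cdot>\<^sub>v v) = sqrt (c^2 * (\<Sum>i<dim_vec v. (v$i)^2))"
    unfolding vnorm_def by (simp add: power_mult_distrib sum_distrib_left)
  thus ?thesis unfolding vnorm_def by (simp add: real_sqrt_mult)
qed

lemma vnorm_uminus: "vnorm (- v) = vnorm v"
  unfolding vnorm_def by simp

lemma vnorm_minus_le:
  assumes "dim_vec v = dim_vec w"
  shows "vnorm (v - w) \<le> vnorm v + vnorm w"
proof -
  have "v - w = v + (- w)" using assms by auto
  thus ?thesis using vnorm_add_le[of v "-w"] assms by (simp add: vnorm_uminus)
qed

definition opb :: "real mat \<Rightarrow> real \<Rightarrow> bool" where
  "opb K c \<longleftrightarrow> (\<forall>v \<in> carrier_vec (dim_col K). vnorm (K *\<^sub>v v) \<le> c * vnorm v)"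

lemma opbD: "opb K c \<Longrightarrow> v \<in> carrier_vec (dim_col K) \<Longrightarrow> vnorm (K *\<^sub>v v) \<le> c * vnorm v"
  unfolding opb_def by auto

lemma fnorm_cols: "(fnorm M)^2 = (\<Sum>j<dim_col M. (vnorm (col M j))^2)"
proof -
  have "(fnorm M)^2 = (\<Sum>i<dim_row M. \<Sum>j<dim_col M. (M $$ (i,j))^2)"
    unfolding fnorm_def by (simp add: sum_nonneg)
  also have "\<dots> = (\<Sum>j<dim_col M. \<Sum>i<dim_row M. (M $$ (i,j))^2)" by (rule sum.swap)
  also have "\<dots> = (\<Sum>j<dim_col M. (vnorm (col M j))^2)"
    by (rule sum.cong, simp, subst vnorm_sq', auto)
  finally show ?thesis .
qed

lemma fnorm_nonneg[simp]: "0 \<le> fnorm M"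
  unfolding fnorm_def by (simp add: sum_nonneg)

lemma fnorm_transpose: "fnorm (transpose_mat M) = fnorm M"
  unfolding fnorm_def by (simp, subst sum.swap, simp)

lemma fnorm_mult_left:
  assumes K: "K \<in> carrier_mat n m" and B: "B \<in> carrier_mat m q" and o: "opb K c" and c: "0 \<le> c"
  shows "fnorm (K * B) \<le> c * fnorm B"
proof -
  have "(fnorm (K * B))^2 = (\<Sum>j<q. (vnorm (K *\<^sub>v col B j))^2)"
    unfolding fnorm_cols using K B by (auto intro!: sum.cong simp del: col_mult simp: col_mult2[OF K B])
  also have "\<dots> \<le> (\<Sum>j<q. (c * vnorm (col B j))^2)"
    apply (rule sum_mono) apply (rule power_mono) using K B
    by (auto intro!: opbD[OF o])
  also have "\<dots> = c^2 * (fnorm B)^2" unfolding fnorm_cols using B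
    by (simp add: power_mult_distrib sum_distrib_left)
  also have "\<dots> = (c * fnorm B)^2" by (simp add: power_mult_distrib)
  finally show ?thesis using c by (meson fnorm_nonneg mult_nonneg_nonneg power2_le_imp_le)
qed

lemma opb_transpose:
  assumes K: "K \<in> carrier_mat n m" and o: "opb K c" and c: "0 \<le> c"
  shows "opb (transpose_mat K) c"
  unfolding opb_def
proof
  fix y :: "real vec" assume "y \<in> carrier_vec (dim_col (transpose_mat K))"
  hence y: "y \<in> carrier_vec n" using K by simp
  let ?z = "transpose_mat K *\<^sub>v y"
  have z: "?z \<in> carrier_vec m" using K y by simp
  have "(vnorm ?z)^2 = ?z \<bullet> ?z" by (rule vnorm_sq)
  also have "\<dots> = y \<bullet> (K *\<^sub>v ?z)" by (rule transpose_vec_mult_scalar[OF K z y])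
  also have "\<dots> \<le> vnorm y * vnorm (K *\<^sub>v ?z)"
    using cauchy_schwarz_vec[of y "K *\<^sub>v ?z"] y K by auto
  also have "\<dots> \<le> vnorm y * (c * vnorm ?z)"
    by (rule mult_left_mono[OF opbD[OF o]]) (use z K in auto)
  finally have "(vnorm ?z)^2 \<le> c * vnorm y * vnorm ?z" by (simp add: ac_simps)
  hence "vnorm ?z * vnorm ?z \<le> (c * vnorm y) * vnorm ?z" by (simp add: power2_eq_square ac_simps)
  thus "vnorm ?z \<le> c * vnorm y"
    using vnorm_nonneg[of ?z] c by (cases "vnorm ?z = 0") (auto simp: mult_le_cancel_right)
qed

lemma fnorm_mult_right:
  assumes B: "B \<in> carrier_mat n m" and K: "K \<in> carrier_mat m q" and o: "opb K c" and c: "0 \<le> c"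
  shows "fnorm (B * K) \<le> fnorm B * c"
proof -
  have "fnorm (B * K) = fnorm (transpose_mat K * transpose_mat B)"
    by (subst fnorm_transpose[symmetric], subst transpose_mult[OF B K], simp)
  also have "\<dots> \<le> c * fnorm (transpose_mat B)"
    by (rule fnorm_mult_left[OF _ _ opb_transpose[OF K o c] c]) (use K B in auto)
  finally show ?thesis by (simp add: fnorm_transpose mult.commute)
qed

lemma opb_fnorm:
  assumes K: "K \<in> carrier_mat n m"
  shows "opb K (fnorm K)"
  unfolding opb_def
proof
  fix v :: "real vec" assume "v \<in> carrier_vec (dim_col K)"
  hence v: "v \<in> carrier_vec m" using K by simp
  have "(vnorm (K *\<^sub>v v))^2 = (\<Sum>i<n. (row K i \<bullet> v)^2)"
    unfolding vnorm_sq' using K by simp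
  also have "\<dots> \<le> (\<Sum>i<n. (vnorm (row K i))^2 * (vnorm v)^2)"
  proof (rule sum_mono)
    fix i assume "i \<in> {..<n}"
    have "\<bar>row K i \<bullet> v\<bar> \<le> vnorm (row K i) * vnorm v"
      by (rule cauchy_schwarz_vec) (use K v in auto)
    hence "\<bar>row K i \<bullet> v\<bar>^2 \<le> (vnorm (row K i) * vnorm v)^2"
      by (rule power_mono) simp
    thus "(row K i \<bullet> v)^2 \<le> (vnorm (row K i))^2 * (vnorm v)^2" by (simp add: power_mult_distrib)
  qed
  also have "\<dots> = (fnorm K * vnorm v)^2"
    unfolding power_mult_distrib sum_distrib_right[symmetric]
    by (subst fnorm_transpose[symmetric], subst fnorm_cols, use K in \<open>auto intro!: sum.cong\<close>)
  finally show "vnorm (K *\<^sub>v v) \<le> fnorm K * vnorm v"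
    by (meson fnorm_nonneg vnorm_nonneg mult_nonneg_nonneg power2_le_imp_le)
qed

lemma opb_mult:
  assumes K: "K \<in> carrier_mat n m" and L: "L \<in> carrier_mat m q"
    and "opb K a" "opb L b" "0 \<le> a"
  shows "opb (K * L) (a * b)"
  unfolding opb_def
proof
  fix v :: "real vec" assume "v \<in> carrier_vec (dim_col (K * L))"
  hence v: "v \<in> carrier_vec q" using L by simp
  have "vnorm ((K * L) *\<^sub>v v) = vnorm (K *\<^sub>v (L *\<^sub>v v))" using K L v by simp
  also have "\<dots> \<le> a * vnorm (L *\<^sub>v v)" by (rule opbD[OF assms(3)]) (use L K v in auto)
  also have "\<dots> \<le> a * (b * vnorm v)" by (rule mult_left_mono[OF opbD[OF assms(4)]]) (use L v assms in auto)
  finally show "vnorm ((K * L) *\<^sub>v v) \<le> a * b * vnorm v" by simp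
qed

lemma opb_mono: "opb K a \<Longrightarrow> a \<le> b \<Longrightarrow> opb K b"
  unfolding opb_def by (meson mult_right_mono order_trans vnorm_nonneg)

lemma fnorm_L2cols: "fnorm M = L2_set (\<lambda>j. vnorm (col M j)) {..<dim_col M}"
  unfolding L2_set_def fnorm_cols[symmetric] by simp

lemma fnorm_add_le:
  assumes "A \<in> carrier_mat n m" "B \<in> carrier_mat n m"
  shows "fnorm (A + B) \<le> fnorm A + fnorm B"
proof -
  have "fnorm (A + B) = L2_set (\<lambda>j. vnorm (col A j + col B j)) {..<m}"
    unfolding fnorm_L2cols using assms by (auto intro!: L2_set_cong)
  also have "\<dots> \<le> L2_set (\<lambda>j. vnorm (col A j) + vnorm (col B j)) {..<m}"
    by (rule L2_set_mono) (use assms in \<open>auto intro!: vnorm_add_le\<close>)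
  also have "\<dots> \<le> L2_set (\<lambda>j. vnorm (col A j)) {..<m} + L2_set (\<lambda>j. vnorm (col B j)) {..<m}"
    by (rule L2_set_triangle_ineq)
  also have "\<dots> = fnorm A + fnorm B"
    unfolding fnorm_L2cols using assms by simp
  finally show ?thesis .
qed

lemma fnorm_smult: "fnorm (c \<cdot>\<^sub>m A) = \<bar>c\<bar> * fnorm A"
proof -
  have "fnorm (c \<cdot>\<^sub>m A) = sqrt (c^2 * (\<Sum>i<dim_row A. \<Sum>j<dim_col A. (A $$ (i,j))^2))"
    unfolding fnorm_def by (simp add: power_mult_distrib sum_distrib_left)
  thus ?thesis unfolding fnorm_def by (simp add: real_sqrt_mult)
qed



declare minus_carrier_mat[simp] uminus_carrier_mat[simp]

lemma vnorm_eq0: "vnorm v = 0 \<Longrightarrow> v = 0\<^sub>v (dim_vec v)"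
  unfolding vnorm_def by (auto simp: sum_nonneg_eq_0_iff intro!: eq_vecI)

lemma vnorm_add_sq: assumes "dim_vec v = dim_vec w"
  shows "(vnorm (v + w))^2 = (vnorm v)^2 + 2 * (v \<bullet> w) + (vnorm w)^2"
  using assms unfolding vnorm_sq' scalar_prod_def
  by (simp add: power2_sum sum.distrib sum_distrib_left atLeast0LessThan mult.assoc)

lemma vnorm_minus_sq: assumes "dim_vec v = dim_vec w"
  shows "(vnorm (v - w))^2 = (vnorm v)^2 - 2 * (v \<bullet> w) + (vnorm w)^2"
  using assms unfolding vnorm_sq' scalar_prod_def
  by (simp add: power2_diff sum.distrib sum_subtractf sum_distrib_left atLeast0LessThan mult.assoc)

definition skew :: "nat \<Rightarrow> real mat \<Rightarrow> bool" where
  "skew n X \<longleftrightarrow> X \<in> carrier_mat n n \<and> transpose_mat X = - X"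

lemma skew_inner:
  assumes "skew n X" and y: "y \<in> carrier_vec n"
  shows "y \<bullet> (X *\<^sub>v y) = 0"
proof -
  have X: "X \<in> carrier_mat n n" and T: "transpose_mat X = - X" using assms unfolding skew_def by auto
  have "(transpose_mat X *\<^sub>v y) \<bullet> y = y \<bullet> (X *\<^sub>v y)" by (rule transpose_vec_mult_scalar[OF X y y])
  moreover have "transpose_mat X *\<^sub>v y = - (X *\<^sub>v y)" unfolding T using X y by simp
  moreover have "(- (X *\<^sub>v y)) \<bullet> y = - ((X *\<^sub>v y) \<bullet> y)" using X y by simp
  moreover have "(X *\<^sub>v y) \<bullet> y = y \<bullet> (X *\<^sub>v y)" by (rule comm_scalar_prod) (use X y in auto)
  ultimately show ?thesis by simp
qed

lemma skew_norm_minus: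
  assumes "skew n X" and y: "y \<in> carrier_vec n"
  shows "(vnorm ((1\<^sub>m n - X) *\<^sub>v y))^2 = (vnorm y)^2 + (vnorm (X *\<^sub>v y))^2"
proof -
  have X: "X \<in> carrier_mat n n" using assms unfolding skew_def by auto
  have "(1\<^sub>m n - X) *\<^sub>v y = y - X *\<^sub>v y" using X y by (simp add: minus_mult_distrib_mat_vec[of "1\<^sub>m n" n n X y])
  thus ?thesis using vnorm_minus_sq[of y "X *\<^sub>v y"] skew_inner[OF assms] X y by simp
qed

lemma skew_norm_plus:
  assumes "skew n X" and y: "y \<in> carrier_vec n"
  shows "(vnorm ((1\<^sub>m n + X) *\<^sub>v y))^2 = (vnorm y)^2 + (vnorm (X *\<^sub>v y))^2"
proof -
  have X: "X \<in> carrier_mat n n" using assms unfolding skew_def by auto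
  have "(1\<^sub>m n + X) *\<^sub>v y = y + X *\<^sub>v y" using X y by (simp add: add_mult_distrib_mat_vec[of "1\<^sub>m n" n n X y])
  thus ?thesis using vnorm_add_sq[of y "X *\<^sub>v y"] skew_inner[OF assms] X y by simp
qed

lemma skew_det:
  assumes "skew n X"
  shows "det (1\<^sub>m n - X) \<noteq> 0"
proof
  have X: "X \<in> carrier_mat n n" using assms unfolding skew_def by auto
  assume "det (1\<^sub>m n - X) = 0"
  then obtain v where v: "v \<in> carrier_vec n" "v \<noteq> 0\<^sub>v n" "(1\<^sub>m n - X) *\<^sub>v v = 0\<^sub>v n"
    using det_0_iff_vec_prod_zero_field[of "1\<^sub>m n - X" n] X by force
  have "(vnorm v)^2 + (vnorm (X *\<^sub>v v))^2 = 0"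
    using skew_norm_minus[OF assms v(1)] v(3) by (simp add: vnorm_def)
  hence "vnorm v = 0" by (simp add: sum_power2_eq_zero_iff)
  thus False using vnorm_eq0[of v] v by auto
qed

lemma skew_minv:
  assumes "skew n X"
  shows "minv (1\<^sub>m n - X) \<in> carrier_mat n n"
    "(1\<^sub>m n - X) * minv (1\<^sub>m n - X) = 1\<^sub>m n"
    "minv (1\<^sub>m n - X) * (1\<^sub>m n - X) = 1\<^sub>m n"
proof -
  have X: "X \<in> carrier_mat n n" using assms unfolding skew_def by auto
  have IX: "1\<^sub>m n - X \<in> carrier_mat n n" using X by simp
  from det_non_zero_imp_unit[OF IX skew_det[OF assms], of "()"]
  obtain B where "B \<in> carrier_mat n n" "B * (1\<^sub>m n - X) = 1\<^sub>m n" "(1\<^sub>m n - X) * B = 1\<^sub>m n"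
    unfolding Units_def ring_mat_def by auto
  hence ex: "\<exists>B. B \<in> carrier_mat (dim_row (1\<^sub>m n - X)) (dim_row (1\<^sub>m n - X)) \<and>
      (1\<^sub>m n - X) * B = 1\<^sub>m (dim_row (1\<^sub>m n - X)) \<and> B * (1\<^sub>m n - X) = 1\<^sub>m (dim_row (1\<^sub>m n - X))"
    using X by auto
  from someI_ex[OF ex] X
  show "minv (1\<^sub>m n - X) \<in> carrier_mat n n"
    "(1\<^sub>m n - X) * minv (1\<^sub>m n - X) = 1\<^sub>m n"
    "minv (1\<^sub>m n - X) * (1\<^sub>m n - X) = 1\<^sub>m n" unfolding minv_def by auto
qed

lemma skew_C_opb:
  assumes "skew n X"
  shows "opb (minv (1\<^sub>m n - X)) 1"
  unfolding opb_def
proof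
  let ?C = "minv (1\<^sub>m n - X)"
  have X: "X \<in> carrier_mat n n" using assms unfolding skew_def by auto
  note C = skew_minv[OF assms]
  fix v :: "real vec" assume "v \<in> carrier_vec (dim_col ?C)"
  hence v: "v \<in> carrier_vec n" using C by simp
  have y: "?C *\<^sub>v v \<in> carrier_vec n" using C v by simp
  have "(1\<^sub>m n - X) *\<^sub>v (?C *\<^sub>v v) = ((1\<^sub>m n - X) * ?C) *\<^sub>v v"
    by (rule assoc_mult_mat_vec[symmetric]) (use C X v in auto)
  hence "(1\<^sub>m n - X) *\<^sub>v (?C *\<^sub>v v) = v" using C(2) v by simp
  hence "(vnorm v)^2 = (vnorm (?C *\<^sub>v v))^2 + (vnorm (X *\<^sub>v (?C *\<^sub>v v)))^2"
    using skew_norm_minus[OF assms y] by simp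
  hence "(vnorm (?C *\<^sub>v v))^2 \<le> (vnorm v)^2" by simp
  thus "vnorm (?C *\<^sub>v v) \<le> 1 * vnorm v" using power2_le_imp_le by simp
qed

lemma skew_Q_opb:
  assumes "skew n X"
  shows "opb ((1\<^sub>m n + X) * minv (1\<^sub>m n - X)) 1"
  unfolding opb_def
proof
  let ?C = "minv (1\<^sub>m n - X)"
  have X: "X \<in> carrier_mat n n" using assms unfolding skew_def by auto
  note C = skew_minv[OF assms]
  fix v :: "real vec" assume "v \<in> carrier_vec (dim_col ((1\<^sub>m n + X) * ?C))"
  hence v: "v \<in> carrier_vec n" using C by simp
  have y: "?C *\<^sub>v v \<in> carrier_vec n" using C v by simp
  have "(1\<^sub>m n - X) *\<^sub>v (?C *\<^sub>v v) = ((1\<^sub>m n - X) * ?C) *\<^sub>v v"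
    by (rule assoc_mult_mat_vec[symmetric]) (use C X v in auto)
  hence "(1\<^sub>m n - X) *\<^sub>v (?C *\<^sub>v v) = v" using C(2) v by simp
  hence "(vnorm v)^2 = (vnorm (?C *\<^sub>v v))^2 + (vnorm (X *\<^sub>v (?C *\<^sub>v v)))^2"
    using skew_norm_minus[OF assms y] by simp
  moreover have "((1\<^sub>m n + X) * ?C) *\<^sub>v v = (1\<^sub>m n + X) *\<^sub>v (?C *\<^sub>v v)"
    by (rule assoc_mult_mat_vec) (use C X v in auto)
  ultimately have "(vnorm (((1\<^sub>m n + X) * ?C) *\<^sub>v v))^2 = (vnorm v)^2"
    using skew_norm_plus[OF assms y] by simp
  thus "vnorm (((1\<^sub>m n + X) * ?C) *\<^sub>v v) \<le> 1 * vnorm v" using power2_le_imp_le by simp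
qed

lemma skew_CT:
  assumes "skew n X"
  shows "transpose_mat (minv (1\<^sub>m n - X)) * (1\<^sub>m n + X) = 1\<^sub>m n"
    "(1\<^sub>m n + X) * transpose_mat (minv (1\<^sub>m n - X)) = 1\<^sub>m n"
proof -
  let ?C = "minv (1\<^sub>m n - X)"
  have X: "X \<in> carrier_mat n n" and T: "transpose_mat X = - X" using assms unfolding skew_def by auto
  note C = skew_minv[OF assms]
  have "transpose_mat (1\<^sub>m n - X) = transpose_mat (1\<^sub>m n) - transpose_mat X"
    by (rule transpose_minus) (use X in auto)
  also have "\<dots> = 1\<^sub>m n + X" unfolding T transpose_one by (intro eq_matI) (use X in auto)
  finally have tr: "transpose_mat (1\<^sub>m n - X) = 1\<^sub>m n + X" .
  have "1\<^sub>m n = transpose_mat ((1\<^sub>m n - X) * ?C)" using C by simp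
  also have "\<dots> = transpose_mat ?C * transpose_mat (1\<^sub>m n - X)"
    by (rule transpose_mult) (use C X in auto)
  finally show "transpose_mat ?C * (1\<^sub>m n + X) = 1\<^sub>m n" unfolding tr by simp
  have "1\<^sub>m n = transpose_mat (?C * (1\<^sub>m n - X))" using C by simp
  also have "\<dots> = transpose_mat (1\<^sub>m n - X) * transpose_mat ?C"
    by (rule transpose_mult) (use C X in auto)
  finally show "(1\<^sub>m n + X) * transpose_mat ?C = 1\<^sub>m n" unfolding tr by simp
qed



definition idx :: "nat \<Rightarrow> (nat \<times> nat) list" where
  "idx n = concat (map (\<lambda>j. map (\<lambda>i. (i,j)) [j..<n]) [0..<n])"

lemma vech_idx: "vech M = vec_of_list (map (\<lambda>(i,j). M $$ (i,j)) (idx (dim_row M)))"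
  unfolding vech_def idx_def by (simp add: map_concat comp_def)

lemma distinct_idx: "distinct (idx n)"
  unfolding idx_def by (rule distinct_concat) (auto simp: distinct_map inj_on_def upt_conv_Cons)

lemma set_idx: "set (idx n) = {(i,j). j \<le> i \<and> i < n}"
  unfolding idx_def by (auto simp: image_iff)

lemma length_idx_sum: "length (idx n) = (\<Sum>j<n. n - j)"
  unfolding idx_def by (simp add: length_concat comp_def sum_list_sum_nth atLeast0LessThan)

lemma tri_sum: "2 * (\<Sum>j<n. n - j) = n * (n + 1::nat)"
proof (induction n)
  case (Suc n)
  have "(\<Sum>j<Suc n. Suc n - j) = (\<Sum>j<n. Suc n - j) + 1" by simp
  also have "(\<Sum>j<n. Suc n - j) = (\<Sum>j<n. (n - j) + 1)" by (rule sum.cong) auto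
  also have "\<dots> = (\<Sum>j<n. n - j) + n" unfolding sum.distrib by simp
  finally show ?case using Suc by simp
qed simp

lemma length_idx: "length (idx n) = n * (n + 1) div 2"
  using tri_sum[of n] unfolding length_idx_sum by simp

definition pos :: "'a list \<Rightarrow> 'a \<Rightarrow> nat" where
  "pos L x = (THE k. k < length L \<and> L ! k = x)"

lemma pos_nth: "distinct L \<Longrightarrow> k < length L \<Longrightarrow> pos L (L ! k) = k"
  unfolding pos_def by (rule the_equality) (auto simp: nth_eq_iff_index_eq)

lemma nth_pos: assumes "distinct L" "x \<in> set L" shows "pos L x < length L \<and> L ! pos L x = x"
proof -
  obtain k where "k < length L" "L ! k = x" using assms(2) by (auto simp: in_set_conv_nth)
  thus ?thesis using pos_nth[OF assms(1)] by auto
qed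

lemma idx_nth: "k < length (idx n) \<Longrightarrow> snd (idx n ! k) \<le> fst (idx n ! k) \<and> fst (idx n ! k) < n"
  using nth_mem[of k "idx n"] unfolding set_idx by auto

definition Mof :: "nat \<Rightarrow> real vec \<Rightarrow> real mat" where
  "Mof n \<mu> = mat n n (\<lambda>(i,j). \<mu> $ pos (idx n) (max i j, min i j))"

lemma Mof_symm: "symm n (Mof n \<mu>)"
  unfolding symm_def Mof_def by (auto intro!: eq_matI simp: max.commute min.commute)

lemma Mof_vech: assumes "\<mu> \<in> carrier_vec (n * (n + 1) div 2)"
  shows "vech (Mof n \<mu>) = \<mu>"
proof (rule eq_vecI)
  show "dim_vec (vech (Mof n \<mu>)) = dim_vec \<mu>" using assms
    by (simp add: vech_idx Mof_def length_idx)
  fix k assume "k < dim_vec \<mu>"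
  hence k: "k < length (idx n)" using assms by (simp add: length_idx)
  obtain i j where ij: "idx n ! k = (i,j)" by fastforce
  with idx_nth[OF k] have "j \<le> i" "i < n" by auto
  hence "vech (Mof n \<mu>) $ k = \<mu> $ pos (idx n) (i,j)"
    using k ij by (simp add: vech_idx Mof_def index_vec_of_list max_def min_def)
  also have "\<dots> = \<mu> $ k" using pos_nth[OF distinct_idx k] ij by simp
  finally show "vech (Mof n \<mu>) $ k = \<mu> $ k" .
qed

lemma symm_entry: assumes "symm n M" "i < n" "j < n" shows "M $$ (i,j) = M $$ (j,i)"
proof -
  have M: "M \<in> carrier_mat n n" "transpose_mat M = M" using assms unfolding symm_def by auto
  have "M $$ (i,j) = transpose_mat M $$ (i,j)" by (simp only: M(2))
  also have "\<dots> = M $$ (j,i)" using M(1) assms by simp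
  finally show ?thesis .
qed

lemma vech_inj:
  assumes "symm n M" "symm n M'" "vech M = vech M'"
  shows "M = M'"
proof -
  have M: "M \<in> carrier_mat n n" "transpose_mat M = M" and M': "M' \<in> carrier_mat n n" "transpose_mat M' = M'"
    using assms unfolding symm_def by auto
  have low: "M $$ (i,j) = M' $$ (i,j)" if "j \<le> i" "i < n" for i j
  proof -
    have "(i,j) \<in> set (idx n)" using that by (simp add: set_idx)
    from nth_pos[OF distinct_idx this] obtain k where k: "k < length (idx n)" "idx n ! k = (i,j)" by blast
    have "vech M $ k = M $$ (i,j)" using k M by (simp add: vech_idx index_vec_of_list)
    moreover have "vech M' $ k = M' $$ (i,j)" using k M' by (simp add: vech_idx index_vec_of_list)
    ultimately show ?thesis using assms(3) by simp
  qed
  show ?thesis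
  proof (rule eq_matI)
    fix i j assume ij: "i < dim_row M'" "j < dim_col M'"
    show "M $$ (i,j) = M' $$ (i,j)"
    proof (cases "j \<le> i")
      case True thus ?thesis using low ij M' by auto
    next
      case False
      hence "M $$ (j,i) = M' $$ (j,i)" using low ij M' by auto
      moreover have "M $$ (i,j) = M $$ (j,i)"
        using symm_entry[OF assms(1)] ij M' by auto
      moreover have "M' $$ (i,j) = M' $$ (j,i)"
        using symm_entry[OF assms(2)] ij M' by auto
      ultimately show ?thesis by simp
    qed
  qed (use M M' in auto)
qed

lemma Mmu_eq: assumes "\<mu> \<in> carrier_vec (n * (n + 1) div 2)"
  shows "Mmu n \<mu> = Mof n \<mu>"
  unfolding Mmu_def
  by (rule the_equality) (use Mof_symm Mof_vech[OF assms] vech_inj in auto)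

lemma Mof_minus: assumes "\<mu> \<in> carrier_vec (n * (n + 1) div 2)" "\<nu> \<in> carrier_vec (n * (n + 1) div 2)"
  shows "Mof n \<mu> - Mof n \<nu> = Mof n (\<mu> - \<nu>)"
proof (rule eq_matI)
  fix i j assume ij: "i < dim_row (Mof n (\<mu> - \<nu>))" "j < dim_col (Mof n (\<mu> - \<nu>))"
  hence "(max i j, min i j) \<in> set (idx n)" by (auto simp: Mof_def set_idx)
  from nth_pos[OF distinct_idx this] have "pos (idx n) (max i j, min i j) < n * (n + 1) div 2"
    by (simp add: length_idx)
  thus "(Mof n \<mu> - Mof n \<nu>) $$ (i,j) = Mof n (\<mu> - \<nu>) $$ (i,j)"
    using ij assms by (simp add: Mof_def)
qed (auto simp: Mof_def)

lemma sum_sym_le: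
  fixes f :: "nat \<Rightarrow> nat \<Rightarrow> real"
  assumes nn: "\<And>i j. 0 \<le> f i j"
  shows "(\<Sum>i<n. \<Sum>j<n. f (max i j) (min i j)) \<le> 2 * (\<Sum>(i,j)\<in>{(i,j). j \<le> i \<and> i < n}. f i j)"
proof -
  let ?S = "{(i,j). j \<le> i \<and> i < n}" and ?T = "{(i,j). i < j \<and> j < n}"
  have fin: "finite ?S" "finite ?T"
    by (rule finite_subset[of _ "{..<n} \<times> {..<n}"], auto)+
  have "(\<Sum>i<n. \<Sum>j<n. f (max i j) (min i j)) = (\<Sum>(i,j)\<in>{..<n} \<times> {..<n}. f (max i j) (min i j))"
    by (simp add: sum.cartesian_product)
  also have "{..<n} \<times> {..<n} = ?S \<union> ?T" by auto
  also have "(\<Sum>(i,j)\<in>?S \<union> ?T. f (max i j) (min i j)) =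
     (\<Sum>(i,j)\<in>?S. f (max i j) (min i j)) + (\<Sum>(i,j)\<in>?T. f (max i j) (min i j))"
    by (rule sum.union_disjoint) (use fin in auto)
  also have "(\<Sum>(i,j)\<in>?S. f (max i j) (min i j)) = (\<Sum>(i,j)\<in>?S. f i j)"
    by (rule sum.cong) (auto simp: max_def min_def)
  also have "(\<Sum>(i,j)\<in>?T. f (max i j) (min i j)) = (\<Sum>(i,j)\<in>?T. f j i)"
    by (rule sum.cong) (auto simp: max_def min_def)
  also have "\<dots> = (\<Sum>(i,j)\<in>{(i,j). j < i \<and> i < n}. f i j)"
    by (rule sum.reindex_bij_witness[of _ "\<lambda>(a,b). (b,a)" "\<lambda>(a,b). (b,a)"]) auto
  also have "\<dots> \<le> (\<Sum>(i,j)\<in>?S. f i j)"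
    by (rule sum_mono2) (use fin nn in \<open>auto simp: case_prod_beta\<close>)
  finally show ?thesis by simp
qed

lemma fnorm_Mof:
  assumes d: "d \<in> carrier_vec (n * (n + 1) div 2)"
  shows "(fnorm (Mof n d))^2 \<le> 2 * (vnorm d)^2"
proof -
  let ?f = "\<lambda>i j. (d $ pos (idx n) (i,j))^2"
  have "(fnorm (Mof n d))^2 = (\<Sum>i<n. \<Sum>j<n. ?f (max i j) (min i j))"
    unfolding fnorm_def by (simp add: sum_nonneg Mof_def)
  also have "\<dots> \<le> 2 * (\<Sum>(i,j)\<in>{(i,j). j \<le> i \<and> i < n}. ?f i j)"
    by (rule sum_sym_le) simp
  also have "(\<Sum>(i,j)\<in>{(i,j). j \<le> i \<and> i < n}. ?f i j) = (\<Sum>(i,j)\<in>set (idx n). ?f i j)"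
    by (simp add: set_idx)
  also have "\<dots> = sum_list (map (\<lambda>(i,j). ?f i j) (idx n))"
    by (rule sum_list_distinct_conv_sum_set[symmetric, OF distinct_idx])
  also have "\<dots> = (\<Sum>k<length (idx n). (\<lambda>(i,j). ?f i j) (idx n ! k))"
    by (simp add: sum_list_sum_nth atLeast0LessThan)
  also have "\<dots> = (\<Sum>k<length (idx n). (d $ k)^2)"
    by (rule sum.cong) (auto simp: case_prod_beta pos_nth[OF distinct_idx])
  also have "\<dots> = (vnorm d)^2" using d by (simp add: vnorm_sq' length_idx)
  finally show ?thesis by simp
qed

lemma mult_unit_vec_index: "(D :: real mat) \<in> carrier_mat r c \<Longrightarrow> a < r \<Longrightarrow> k < c \<Longrightarrow>
  (D *\<^sub>v unit_vec c k) $ a = D $$ (a,k)"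
proof -
  assume D: "D \<in> carrier_mat r c" and a: "a < r" and k: "k < c"
  have "(D *\<^sub>v unit_vec c k) $ a = row D a \<bullet> unit_vec c k"
    by (rule index_mult_mat_vec) (use D a in auto)
  also have "\<dots> = row D a $ k" by (rule scalar_prod_right_unit[OF k])
  also have "\<dots> = D $$ (a,k)" by (rule index_row) (use D a k in auto)
  finally show ?thesis .
qed

definition Dm :: "nat \<Rightarrow> real mat" where
  "Dm n = mat (n*n) (n * (n + 1) div 2) (\<lambda>(a,k).
     if idx n ! k = (max (a mod n) (a div n), min (a mod n) (a div n)) then 1 else 0)"

lemma Dm_prop:
  assumes "symm n M"
  shows "vecm M = Dm n *\<^sub>v vech M"
proof (rule eq_vecI)
  have M: "M \<in> carrier_mat n n" "transpose_mat M = M" using assms unfolding symm_def by auto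
  show "dim_vec (vecm M) = dim_vec (Dm n *\<^sub>v vech M)" using M by (simp add: vecm_def Dm_def)
  fix a assume "a < dim_vec (Dm n *\<^sub>v vech M)"
  hence a: "a < n * n" by (simp add: Dm_def)
  have n: "0 < n" using a by (cases n) auto
  let ?t = "(max (a mod n) (a div n), min (a mod n) (a div n))"
  have adiv: "a div n < n" using a by (simp add: less_mult_imp_div_less)
  have amod: "a mod n < n" using n by simp
  have t: "?t \<in> set (idx n)" using adiv amod by (auto simp: set_idx)
  from nth_pos[OF distinct_idx t] have pt: "pos (idx n) ?t < length (idx n)" "idx n ! pos (idx n) ?t = ?t" by auto
  have "(Dm n *\<^sub>v vech M) $ a = (\<Sum>k<length (idx n). (if idx n ! k = ?t then 1 else 0) * vech M $ k)"
    using a M by (simp add: Dm_def scalar_prod_def vech_idx length_idx atLeast0LessThan)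
  also have "\<dots> = (\<Sum>k<length (idx n). (if k = pos (idx n) ?t then vech M $ k else 0))"
    apply (rule sum.cong, simp)
    subgoal for k using pos_nth[OF distinct_idx[of n], of k] pt by auto
    done
  also have "\<dots> = vech M $ pos (idx n) ?t" using pt by simp
  also have "\<dots> = M $$ ?t" using pt M by (simp add: vech_idx index_vec_of_list)
  also have "\<dots> = M $$ (a mod n, a div n)"
    using symm_entry[OF assms, of "a mod n" "a div n"] adiv amod
    by (cases "a div n \<le> a mod n") (auto simp: max_def min_def)
  finally show "vecm M $ a = (Dm n *\<^sub>v vech M) $ a" using M a by (simp add: vecm_def)
qed

lemma dupl_eq: "dupl n = Dm n"
  unfolding dupl_def
proof (rule the_equality)
  show "Dm n \<in> carrier_mat (n * n) (n * (n + 1) div 2) \<and> (\<forall>M. symm n M \<longrightarrow> vecm M = Dm n *\<^sub>v vech M)"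
    using Dm_prop by (auto simp: Dm_def)
  fix D assume D: "D \<in> carrier_mat (n * n) (n * (n + 1) div 2) \<and> (\<forall>M. symm n M \<longrightarrow> vecm M = D *\<^sub>v vech M)"
  show "D = Dm n"
  proof (rule eq_matI)
    fix a k assume ak: "a < dim_row (Dm n)" "k < dim_col (Dm n)"
    let ?e = "unit_vec (n * (n + 1) div 2) k"
    have e: "?e \<in> carrier_vec (n * (n + 1) div 2)" by simp
    have "D *\<^sub>v vech (Mof n ?e) = Dm n *\<^sub>v vech (Mof n ?e)"
      using D Dm_prop[OF Mof_symm] Mof_symm by metis
    hence "D *\<^sub>v ?e = Dm n *\<^sub>v ?e" unfolding Mof_vech[OF e] .
    hence h1: "(D *\<^sub>v ?e) $ a = (Dm n *\<^sub>v ?e) $ a" by (rule arg_cong)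
    have Dc: "D \<in> carrier_mat (n * n) (n * (n + 1) div 2)" using D by blast
    have Dmc: "Dm n \<in> carrier_mat (n * n) (n * (n + 1) div 2)" by (simp add: Dm_def)
    have ak': "a < n * n" "k < n * (n + 1) div 2" using ak by (auto simp: Dm_def)
    have h2: "(D *\<^sub>v ?e) $ a = D $$ (a,k)" by (rule mult_unit_vec_index[OF Dc ak'])
    have h3: "(Dm n *\<^sub>v ?e) $ a = Dm n $$ (a,k)" by (rule mult_unit_vec_index[OF Dmc ak'])
    show "D $$ (a,k) = Dm n $$ (a,k)" using h1 h2 h3 by metis
  qed (use D in \<open>auto simp: Dm_def\<close>)
qed



lemma idx_bound: "a < m \<Longrightarrow> b < n \<Longrightarrow> a + m * b < m * (n::nat)"
proof -
  assume a: "a < m" and b: "b < n"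
  have "a + m * b < m + m * b" using a by simp
  also have "\<dots> = m * (b + 1)" by (simp add: algebra_simps)
  also have "\<dots> \<le> m * n" using b by (intro mult_le_mono2) simp
  finally show ?thesis .
qed

lemma sum_mult_index:
  fixes f :: "nat \<Rightarrow> real"
  shows "(\<Sum>l<m*n. f l) = (\<Sum>b<n. \<Sum>a<m. f (a + m*b))"
proof -
  have "(\<Sum>l<m*n. f l) = (\<Sum>(a,b)\<in>{..<m} \<times> {..<n}. f (a + m*b))"
    apply (rule sum.reindex_bij_witness[of _ "\<lambda>(a,b). a + m*b" "\<lambda>l. (l mod m, l div m)"])
    subgoal by simp
    subgoal for l by (cases m) (auto simp: less_mult_imp_div_less mult.commute)
    subgoal for ab by (cases ab) auto
    subgoal for ab by (cases ab) (auto simp: idx_bound)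
    subgoal by simp
    done
  also have "\<dots> = (\<Sum>a<m. \<Sum>b<n. f (a + m*b))" by (rule sum.cartesian_product[symmetric])
  also have "\<dots> = (\<Sum>b<n. \<Sum>a<m. f (a + m*b))" by (rule sum.swap)
  finally show ?thesis .
qed

lemma sum_split_add:
  fixes g :: "nat \<Rightarrow> real"
  shows "(\<Sum>j<m1+m2. g j) = (\<Sum>j<m1. g j) + (\<Sum>j<m2. g (m1+j))"
  by (induction m2) auto

lemma vecm_carrier[simp]: "M \<in> carrier_mat n m \<Longrightarrow> vecm M \<in> carrier_vec (n*m)"
  unfolding vecm_def by simp

lemma dim_vecm[simp]: "dim_vec (vecm M) = dim_row M * dim_col M"
  unfolding vecm_def by simp

lemma vecm_index: "M \<in> carrier_mat n m \<Longrightarrow> a < n \<Longrightarrow> b < m \<Longrightarrow> vecm M $ (a + n*b) = M $$ (a,b)"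
proof -
  assume M: "M \<in> carrier_mat n m" and a: "a < n" and b: "b < m"
  have "a + n * b < n * m"
  proof -
    have "a + n * b < n + n * b" using a by simp
    also have "\<dots> = n * (b + 1)" by (simp add: algebra_simps)
    also have "\<dots> \<le> n * m" using b by (intro mult_le_mono2) simp
    finally show ?thesis .
  qed
  thus ?thesis using M a b unfolding vecm_def by simp
qed

lemma kron_vecm:
  assumes P: "P \<in> carrier_mat pr pc" and Q: "Q \<in> carrier_mat qr qc" and X: "X \<in> carrier_mat qc pc"
  shows "kron P Q *\<^sub>v vecm X = vecm (Q * X * transpose_mat P)"
proof (rule eq_vecI)
  show "dim_vec (kron P Q *\<^sub>v vecm X) = dim_vec (vecm (Q * X * transpose_mat P))"
    using P Q X by (simp add: kron_def)
  fix k assume "k < dim_vec (vecm (Q * X * transpose_mat P))"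
  hence k: "k < qr * pr" using P Q X by simp
  have qr: "0 < qr" using k by (cases qr) auto
  have kd: "k div qr < pr" using k by (simp add: less_mult_imp_div_less mult.commute)
  have km: "k mod qr < qr" using qr by simp
  have "(kron P Q *\<^sub>v vecm X) $ k = (\<Sum>l<qc*pc. P $$ (k div qr, l div qc) * Q $$ (k mod qr, l mod qc) * vecm X $ l)"
    using P Q X k by (simp add: kron_def scalar_prod_def atLeast0LessThan mult.commute[of pr qr] mult.commute[of pc qc])
  also have "\<dots> = (\<Sum>b<pc. \<Sum>a<qc. P $$ (k div qr, b) * Q $$ (k mod qr, a) * X $$ (a, b))"
    unfolding sum_mult_index
    by (intro sum.cong refl) (use X in \<open>auto simp: vecm_index\<close>)
  also have "\<dots> = (Q * X * transpose_mat P) $$ (k mod qr, k div qr)"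
    using P Q X kd km apply (simp add: scalar_prod_def atLeast0LessThan sum_distrib_left sum_distrib_right ac_simps)
    by (rule sum.swap)
  also have "\<dots> = vecm (Q * X * transpose_mat P) $ k"
    using P Q X k by (simp add: vecm_def)
  finally show "(kron P Q *\<^sub>v vecm X) $ k = vecm (Q * X * transpose_mat P) $ k" .
qed

lemma commut_vecm:
  assumes M: "M \<in> carrier_mat p q"
  shows "commut p q *\<^sub>v vecm M = vecm (transpose_mat M)"
proof (rule eq_vecI)
  show "dim_vec (commut p q *\<^sub>v vecm M) = dim_vec (vecm (transpose_mat M))"
    using M by (simp add: commut_def)
  fix i assume "i < dim_vec (vecm (transpose_mat M))"
  hence i: "i < p * q" using M by (simp add: mult.commute)
  have q: "0 < q" using i by (cases q) auto
  have id: "i div q < p" using i by (simp add: less_mult_imp_div_less mult.commute)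
  have im: "i mod q < q" using q by simp
  have "(commut p q *\<^sub>v vecm M) $ i = (\<Sum>j<p*q. (if i = j div p + q * (j mod p) then 1 else 0) * vecm M $ j)"
    using M i by (simp add: commut_def scalar_prod_def atLeast0LessThan)
  also have "\<dots> = (\<Sum>b<q. \<Sum>a<p. (if i = b + q * a then M $$ (a,b) else 0))"
    unfolding sum_mult_index
    by (intro sum.cong refl) (use M in \<open>auto simp: vecm_index\<close>)
  also have "\<dots> = (\<Sum>b<q. if b = i mod q then M $$ (i div q, b) else 0)"
  proof (rule sum.cong[OF refl])
    fix b assume b: "b \<in> {..<q}"
    have eq: "(i = b + q * a) \<longleftrightarrow> (b = i mod q \<and> a = i div q)" for a
    proof
      assume "i = b + q * a" thus "b = i mod q \<and> a = i div q" using b by auto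
    next
      assume "b = i mod q \<and> a = i div q" thus "i = b + q * a" by simp
    qed
    show "(\<Sum>a<p. if i = b + q * a then M $$ (a, b) else 0) = (if b = i mod q then M $$ (i div q, b) else 0)"
      unfolding eq using id by (auto simp: sum.delta')
  qed
  also have "\<dots> = M $$ (i div q, i mod q)" using im by (simp add: sum.delta')
  also have "\<dots> = vecm (transpose_mat M) $ i" using M i id im by (simp add: vecm_def mult.commute[of q p])
  finally show "(commut p q *\<^sub>v vecm M) $ i = vecm (transpose_mat M) $ i" .
qed

lemma hcat_mult:
  assumes A: "A \<in> carrier_mat n m1" and B: "B \<in> carrier_mat n m2"
    and x: "x \<in> carrier_vec m1" and y: "y \<in> carrier_vec m2"
  shows "hcat A B *\<^sub>v (x @\<^sub>v y) = A *\<^sub>v x + B *\<^sub>v y"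
proof (rule eq_vecI)
  show "dim_vec (hcat A B *\<^sub>v (x @\<^sub>v y)) = dim_vec (A *\<^sub>v x + B *\<^sub>v y)"
    using A B by (simp add: hcat_def)
  fix i assume "i < dim_vec (A *\<^sub>v x + B *\<^sub>v y)"
  hence i: "i < n" using B by simp
  have "(hcat A B *\<^sub>v (x @\<^sub>v y)) $ i = (\<Sum>j<m1+m2. (if j < m1 then A $$ (i,j) else B $$ (i, j - m1)) * (x @\<^sub>v y) $ j)"
  proof -
    have d: "dim_col A = m1" "dim_vec x = m1" "dim_col B = m2" "dim_vec y = m2" "dim_row A = n" using A B x y by auto
    show ?thesis using i by (simp add: d hcat_def scalar_prod_def atLeast0LessThan cong: if_cong)
  qed
  also have "\<dots> = (\<Sum>j<m1. A $$ (i,j) * x $ j) + (\<Sum>j<m2. B $$ (i,j) * y $ j)"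
    unfolding sum_split_add using x y by (simp cong: if_cong)
  also have "\<dots> = (A *\<^sub>v x + B *\<^sub>v y) $ i"
    using A B x y i by (simp add: scalar_prod_def atLeast0LessThan)
  finally show "(hcat A B *\<^sub>v (x @\<^sub>v y)) $ i = (A *\<^sub>v x + B *\<^sub>v y) $ i" .
qed



lemma divmod_bound: "i < n * (m::nat) \<Longrightarrow> i mod n < n \<and> i div n < m"
  by (cases n) (auto simp: less_mult_imp_div_less mult.commute)

lemma vecm_add: assumes "A \<in> carrier_mat n m" "B \<in> carrier_mat n m" shows "vecm (A + B) = vecm A + vecm B"
proof (rule eq_vecI)
  fix i assume "i < dim_vec (vecm A + vecm B)"
  hence "i < n * m" using assms by simp
  from divmod_bound[OF this] show "vecm (A + B) $ i = (vecm A + vecm B) $ i"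
    using assms \<open>i < n * m\<close> by (simp add: vecm_def)
qed (use assms in simp)

lemma vecm_minus: assumes "A \<in> carrier_mat n m" "B \<in> carrier_mat n m" shows "vecm (A - B) = vecm A - vecm B"
proof (rule eq_vecI)
  fix i assume "i < dim_vec (vecm A - vecm B)"
  hence "i < n * m" using assms by simp
  from divmod_bound[OF this] show "vecm (A - B) $ i = (vecm A - vecm B) $ i"
    using assms \<open>i < n * m\<close> by (simp add: vecm_def)
qed (use assms in simp)

lemma vecm_smult: "vecm (c \<cdot>\<^sub>m A) = c \<cdot>\<^sub>v vecm A"
proof (rule eq_vecI)
  fix i assume "i < dim_vec (c \<cdot>\<^sub>v vecm A)"
  hence "i < dim_row A * dim_col A" by simp
  from divmod_bound[OF this] show "vecm (c \<cdot>\<^sub>m A) $ i = (c \<cdot>\<^sub>v vecm A) $ i"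
    using \<open>i < dim_row A * dim_col A\<close> by (simp add: vecm_def)
qed simp

lemma fnorm_vecm: "fnorm M = vnorm (vecm M)"
proof -
  have M: "M \<in> carrier_mat (dim_row M) (dim_col M)" unfolding carrier_mat_def by blast
  have "(vnorm (vecm M))^2 = (\<Sum>l<dim_row M * dim_col M. (vecm M $ l)^2)" by (simp add: vnorm_sq')
  also have "\<dots> = (\<Sum>b<dim_col M. \<Sum>a<dim_row M. (vecm M $ (a + dim_row M * b))^2)"
    by (rule sum_mult_index[of "\<lambda>l. (vecm M $ l)^2"])
  also have "\<dots> = (\<Sum>b<dim_col M. \<Sum>a<dim_row M. (M $$ (a,b))^2)"
    by (intro sum.cong refl) (simp add: vecm_index[OF M])
  also have "\<dots> = (\<Sum>a<dim_row M. \<Sum>b<dim_col M. (M $$ (a,b))^2)" by (rule sum.swap)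
  also have "\<dots> = (fnorm M)^2" unfolding fnorm_def by (simp add: sum_nonneg)
  finally have "(vnorm (vecm M))^2 = (fnorm M)^2" .
  thus ?thesis using fnorm_nonneg vnorm_nonneg power2_eq_iff_nonneg by metis
qed

lemma vnorm_append_sq: "(vnorm (x @\<^sub>v y))^2 = (vnorm x)^2 + (vnorm y)^2"
  unfolding vnorm_sq' by (simp add: sum_split_add cong: if_cong)

lemma theta_minus:
  assumes "A \<in> carrier_mat n m" "A0 \<in> carrier_mat n m" "\<mu> \<in> carrier_vec k" "\<mu>0 \<in> carrier_vec k"
  shows "theta A \<mu> - theta A0 \<mu>0 = (vecm A - vecm A0) @\<^sub>v (\<mu> - \<mu>0)"
  using assms unfolding theta_def by (intro eq_vecI) auto

lemma dim_Xphi[simp]: "dim_row (Xphi p r A) = r + (p - r)" "dim_col (Xphi p r A) = r + (p - r)"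
  unfolding Xphi_def by auto

lemma dim_Theta[simp]: "dim_row (Theta1 p r) = r" "dim_col (Theta1 p r) = p"
  "dim_row (Theta2 p r) = p - r" "dim_col (Theta2 p r) = p" "dim_row (Ipr p r) = p" "dim_col (Ipr p r) = r"
  unfolding Theta1_def Theta2_def Ipr_def by auto

lemma Theta1_carrier: "Theta1 p r \<in> carrier_mat r p" unfolding Theta1_def Ipr_def by auto
lemma Theta2_carrier: "Theta2 p r \<in> carrier_mat (p - r) p" unfolding Theta2_def by auto
lemma Ipr_carrier: "Ipr p r \<in> carrier_mat p r" unfolding Ipr_def by auto

lemma Xphi_carrier: "A \<in> carrier_mat (p-r) r \<Longrightarrow> r \<le> p \<Longrightarrow> Xphi p r A \<in> carrier_mat p p"
  unfolding Xphi_def by (rule carrier_matI) auto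

lemma Xphi_index:
  assumes A: "A \<in> carrier_mat (p-r) r" and rp: "r \<le> p" and ij: "i < p" "j < p"
  shows "Xphi p r A $$ (i,j) = (if i < r then (if j < r then 0 else - A $$ (j - r, i))
                                 else (if j < r then A $$ (i - r, j) else 0))"
  using assms unfolding Xphi_def by auto

lemma Xphi_skew: assumes "A \<in> carrier_mat (p-r) r" "r \<le> p" shows "skew p (Xphi p r A)"
  unfolding skew_def
proof
  show "Xphi p r A \<in> carrier_mat p p" using Xphi_carrier[OF assms] .
  show "transpose_mat (Xphi p r A) = - Xphi p r A"
    by (rule eq_matI) (use assms in \<open>auto simp: Xphi_index\<close>)
qed

lemma Xphi_minus:
  assumes "A \<in> carrier_mat (p-r) r" "A0 \<in> carrier_mat (p-r) r" "r \<le> p"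
  shows "Xphi p r A - Xphi p r A0 = Xphi p r (A - A0)"
  by (rule eq_matI) (use assms in \<open>auto simp: Xphi_index\<close>)

lemma fnorm_Xphi:
  assumes A: "A \<in> carrier_mat (p-r) r" and rp: "r \<le> p"
  shows "(fnorm (Xphi p r A))^2 = 2 * (fnorm A)^2"
proof -
  have pe: "p = r + (p - r)" using rp by simp
  let ?X = "Xphi p r A"
  have X: "?X \<in> carrier_mat p p" using Xphi_carrier[OF A rp] .
  have "(fnorm ?X)^2 = (\<Sum>i<r + (p - r). \<Sum>j<r + (p - r). (?X $$ (i,j))^2)"
    unfolding fnorm_def dim_Xphi by (simp add: sum_nonneg)
  also have "\<dots> = (\<Sum>i<r. \<Sum>j<p - r. (A $$ (j,i))^2) + (\<Sum>i<p - r. \<Sum>j<r. (A $$ (i,j))^2)"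
    unfolding sum_split_add using A rp by (simp add: Xphi_index)
  also have "(\<Sum>i<r. \<Sum>j<p - r. (A $$ (j,i))^2) = (\<Sum>i<p - r. \<Sum>j<r. (A $$ (i,j))^2)" by (rule sum.swap)
  also have "(\<Sum>i<p - r. \<Sum>j<r. (A $$ (i,j))^2) = (fnorm A)^2" unfolding fnorm_def using A by (simp add: sum_nonneg)
  finally show ?thesis by simp
qed

lemma Theta_Y_index:
  assumes A: "A \<in> carrier_mat (p-r) r" and rp: "r \<le> p" and ij: "i < p" "j < p"
  shows "(transpose_mat (Theta2 p r) * A * Theta1 p r) $$ (i,j) = (if r \<le> i \<and> j < r then A $$ (i - r, j) else 0)"
proof -
  have T2: "transpose_mat (Theta2 p r) * A \<in> carrier_mat p r"
    using mult_carrier_mat[OF transpose_carrier_mat[THEN iffD2, OF Theta2_carrier] A] .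
  have e1: "(transpose_mat (Theta2 p r) * A) $$ (i,b) = (if r \<le> i then A $$ (i - r, b) else 0)" if b: "b < r" for b
  proof -
    have "(transpose_mat (Theta2 p r) * A) $$ (i,b) = (\<Sum>a<p-r. (if i = r + a then 1 else 0) * A $$ (a,b))"
      using A ij b by (simp add: Theta2_def scalar_prod_def atLeast0LessThan)
    also have "\<dots> = (\<Sum>a<p-r. (if a = i - r \<and> r \<le> i then A $$ (a,b) else 0))"
      by (rule sum.cong) auto
    also have "\<dots> = (if r \<le> i then A $$ (i - r, b) else 0)" using ij rp by (auto simp: sum.delta')
    finally show ?thesis .
  qed
  have "(transpose_mat (Theta2 p r) * A * Theta1 p r) $$ (i,j) = (\<Sum>b<r. (transpose_mat (Theta2 p r) * A) $$ (i,b) * (if j = b then 1 else 0))"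
  proof -
    have d: "dim_row (transpose_mat (Theta2 p r) * A) = p" "dim_col (transpose_mat (Theta2 p r) * A) = r" using T2 by auto
    show ?thesis using ij apply (simp add: d Theta1_def Ipr_def scalar_prod_def atLeast0LessThan)
      by (intro sum.cong refl) (use A in \<open>simp add: d\<close>)
  qed
  also have "\<dots> = (\<Sum>b<r. if b = j then (if r \<le> i then A $$ (i - r, b) else 0) else 0)"
    by (rule sum.cong) (auto simp: e1)
  also have "\<dots> = (if r \<le> i \<and> j < r then A $$ (i - r, j) else 0)" by (auto simp: sum.delta')
  finally show ?thesis .
qed

lemma Gam_vecm:
  assumes A: "A \<in> carrier_mat (p-r) r" and rp: "r \<le> p"
  shows "Gam p r *\<^sub>v vecm A = vecm (Xphi p r A)"
proof -
  let ?Y = "transpose_mat (Theta2 p r) * A * Theta1 p r"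
  have T1: "transpose_mat (Theta1 p r) \<in> carrier_mat p r" by (simp add: Theta1_def Ipr_def)
  have T2: "transpose_mat (Theta2 p r) \<in> carrier_mat p (p-r)" by (simp add: Theta2_def)
  have Y: "?Y \<in> carrier_mat p p"
    using mult_carrier_mat[OF mult_carrier_mat[OF transpose_carrier_mat[THEN iffD2, OF Theta2_carrier] A] Theta1_carrier] .
  have K: "commut p p \<in> carrier_mat (p*p) (p*p)" by (simp add: commut_def)
  have kr: "kron (transpose_mat (Theta1 p r)) (transpose_mat (Theta2 p r)) \<in> carrier_mat (p*p) (r*(p-r))"
    by (simp add: kron_def Theta1_def Theta2_def Ipr_def)
  have v: "vecm A \<in> carrier_vec (r*(p-r))" using vecm_carrier[OF A] by (simp add: mult.commute)
  have "Gam p r *\<^sub>v vecm A = (1\<^sub>m (p*p) - commut p p) *\<^sub>v (kron (transpose_mat (Theta1 p r)) (transpose_mat (Theta2 p r)) *\<^sub>v vecm A)"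
    unfolding Gam_def by (rule assoc_mult_mat_vec) (use K kr v in auto)
  also have "kron (transpose_mat (Theta1 p r)) (transpose_mat (Theta2 p r)) *\<^sub>v vecm A = vecm ?Y"
    using kron_vecm[OF T1 T2 A] by simp
  also have "(1\<^sub>m (p*p) - commut p p) *\<^sub>v vecm ?Y = vecm ?Y - commut p p *\<^sub>v vecm ?Y"
    using K Y by (simp add: minus_mult_distrib_mat_vec[of _ "p*p" "p*p"])
  also have "\<dots> = vecm ?Y - vecm (transpose_mat ?Y)" using commut_vecm[OF Y] by simp
  also have "\<dots> = vecm (?Y - transpose_mat ?Y)" using Y by (simp add: vecm_minus[of _ p p])
  also have "?Y - transpose_mat ?Y = Xphi p r A"
  proof (rule eq_matI)
    fix i j assume ij: "i < dim_row (Xphi p r A)" "j < dim_col (Xphi p r A)"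
    hence ij': "i < p" "j < p" using rp by auto
    have "(?Y - transpose_mat ?Y) $$ (i,j) = ?Y $$ (i,j) - ?Y $$ (j,i)" using ij' A by simp
    also have "\<dots> = Xphi p r A $$ (i,j)"
      unfolding Theta_Y_index[OF A rp ij'] Theta_Y_index[OF A rp ij'(2) ij'(1)]
      using ij' A rp by (simp add: Xphi_index)
    finally show "(?Y - transpose_mat ?Y) $$ (i,j) = Xphi p r A $$ (i,j)" .
  qed (use rp A in auto)
  finally show ?thesis .
qed



lemma massoc: "dim_col (A::real mat) = dim_row B \<Longrightarrow> dim_col B = dim_row C \<Longrightarrow> A * B * C = A * (B * C)"
  by (rule assoc_mult_mat[of A "dim_row A" "dim_col A" B "dim_col B" C "dim_col C"]) (auto intro!: carrier_matI)

lemma mdistl: "dim_col (A::real mat) = dim_row B \<Longrightarrow> dim_row B = dim_row C \<Longrightarrow> dim_col B = dim_col C \<Longrightarrow> A * (B + C) = A * B + A * C"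
  by (rule mult_add_distrib_mat[of A "dim_row A" "dim_col A" B "dim_col B" C]) (auto intro!: carrier_matI)

lemma mdistr: "dim_row (A::real mat) = dim_row B \<Longrightarrow> dim_col A = dim_col B \<Longrightarrow> dim_col A = dim_row C \<Longrightarrow> (A + B) * C = A * C + B * C"
  by (rule add_mult_distrib_mat[of A "dim_row A" "dim_col A" B C "dim_col C"]) (auto intro!: carrier_matI)

lemma mdistl_minus: "dim_col (A::real mat) = dim_row B \<Longrightarrow> dim_row B = dim_row C \<Longrightarrow> dim_col B = dim_col C \<Longrightarrow> A * (B - C) = A * B - A * C"
  by (rule mult_minus_distrib_mat[of A "dim_row A" "dim_col A" B "dim_col B" C]) (auto intro!: carrier_matI)

lemma mdistr_minus: "dim_row (A::real mat) = dim_row B \<Longrightarrow> dim_col A = dim_col B \<Longrightarrow> dim_col A = dim_row C \<Longrightarrow> (A - B) * C = A * C - B * C"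
  by (rule minus_mult_distrib_mat[of A "dim_row A" "dim_col A" B C "dim_col C"]) (auto intro!: carrier_matI)

lemma msmultl: "dim_col (A::real mat) = dim_row B \<Longrightarrow> (c \<cdot>\<^sub>m A) * B = c \<cdot>\<^sub>m (A * B)"
  by (rule eq_matI) (auto simp: scalar_prod_def sum_distrib_left ac_simps intro!: sum.cong)

lemma msmultr: "dim_col (A::real mat) = dim_row B \<Longrightarrow> A * (c \<cdot>\<^sub>m B) = c \<cdot>\<^sub>m (A * B)"
  by (rule eq_matI) (auto simp: scalar_prod_def sum_distrib_left ac_simps intro!: sum.cong)

lemma muminusl: "dim_col (A::real mat) = dim_row B \<Longrightarrow> (- A) * B = - (A * B)"
  by simp

lemma tmult: "dim_col (A::real mat) = dim_row B \<Longrightarrow> transpose_mat (A * B) = transpose_mat B * transpose_mat A"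
  by (rule transpose_mult[of A "dim_row A" "dim_col A" B "dim_col B"]) (auto intro!: carrier_matI)

lemma tadd: "dim_row (A::real mat) = dim_row B \<Longrightarrow> dim_col A = dim_col B \<Longrightarrow> transpose_mat (A + B) = transpose_mat A + transpose_mat B"
  by (rule transpose_add[of A "dim_row A" "dim_col A"]) (auto intro!: carrier_matI)

lemma tminus: "dim_row (A::real mat) = dim_row B \<Longrightarrow> dim_col A = dim_col B \<Longrightarrow> transpose_mat (A - B) = transpose_mat A - transpose_mat B"
  by (rule transpose_minus[of A "dim_row A" "dim_col A"]) (auto intro!: carrier_matI)

lemma tsmult: "transpose_mat (c \<cdot>\<^sub>m (A::real mat)) = c \<cdot>\<^sub>m transpose_mat A"
  by (rule eq_matI) auto

lemma tuminus: "transpose_mat (- (A::real mat)) = - transpose_mat A"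
  by (rule eq_matI) auto

lemma dim_mult_row: "dim_row (A * B) = dim_row A" by simp
lemma dim_mult_col: "dim_col (A * B) = dim_col B" by simp

lemmas idxrules = index_add_mat index_minus_mat index_smult_mat index_uminus_mat
  index_mult_mat(2,3) index_transpose_mat(2,3)

lemmas normrules = massoc mdistl mdistr mdistl_minus mdistr_minus msmultl msmultr tmult tadd tminus tsmult tuminus
  transpose_transpose

lemma core_identity:
  fixes U0 G Z M0 DM :: "real mat"
  assumes U0: "U0 \<in> carrier_mat p r" and G: "G \<in> carrier_mat p r" and Z: "Z \<in> carrier_mat p r"
    and M0: "M0 \<in> carrier_mat r r" and DM: "DM \<in> carrier_mat r r" and sym: "transpose_mat M0 = M0"
  shows "(U0 + G) * (M0 + DM) * transpose_mat (U0 + G) - U0 * M0 * transpose_mat U0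
     - ((G - Z) * transpose_mat (U0 * M0) + transpose_mat ((G - Z) * transpose_mat (U0 * M0)) + U0 * DM * transpose_mat U0)
   = Z * M0 * transpose_mat U0 + U0 * M0 * transpose_mat Z + G * M0 * transpose_mat G
     + G * DM * transpose_mat (U0 + G) + U0 * DM * transpose_mat G"
proof -
  have d: "dim_row U0 = p" "dim_col U0 = r" "dim_row G = p" "dim_col G = r" "dim_row Z = p" "dim_col Z = r"
    "dim_row M0 = r" "dim_col M0 = r" "dim_row DM = r" "dim_col DM = r" using assms by auto
  show ?thesis
    apply (simp add: normrules d sym)
    apply (rule eq_matI)
    apply (simp_all only: idxrules d)
    done
qed


lemma lin_identity:
  fixes C0 Q0 dX E M0 :: "real mat"
  assumes C0: "C0 \<in> carrier_mat p p" and Q0: "Q0 \<in> carrier_mat p p" and dX: "dX \<in> carrier_mat p p"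
    and E: "E \<in> carrier_mat p r" and M0: "M0 \<in> carrier_mat r r" and sym: "transpose_mat M0 = M0"
    and CQ: "transpose_mat C0 * Q0 = C0" and skw: "transpose_mat dX = - dX"
  shows "2 \<cdot>\<^sub>m (C0 * dX * transpose_mat C0 * (Q0 * E * M0 * transpose_mat (Q0 * E)))
      = 2 \<cdot>\<^sub>m (C0 * dX * (C0 * E)) * transpose_mat (Q0 * E * M0)"
    "- (2 \<cdot>\<^sub>m ((Q0 * E * M0 * transpose_mat (Q0 * E)) * C0 * dX * transpose_mat C0))
      = transpose_mat (2 \<cdot>\<^sub>m (C0 * dX * (C0 * E)) * transpose_mat (Q0 * E * M0))"
proof -
  have d: "dim_row C0 = p" "dim_col C0 = p" "dim_row Q0 = p" "dim_col Q0 = p" "dim_row dX = p" "dim_col dX = p"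
    "dim_row E = p" "dim_col E = r" "dim_row M0 = r" "dim_col M0 = r" using assms by auto
  have CQ': "transpose_mat C0 * (Q0 * Y) = C0 * Y" if "dim_row Y = p" for Y
    using massoc[of "transpose_mat C0" Q0 Y] that d CQ by simp
  have QC: "transpose_mat Q0 * C0 = transpose_mat C0"
    using arg_cong[OF CQ, of transpose_mat] tmult[of "transpose_mat C0" Q0] d by simp
  have QC': "transpose_mat Q0 * (C0 * Y) = transpose_mat C0 * Y" if "dim_row Y = p" for Y
    using massoc[of "transpose_mat Q0" C0 Y] that d QC by simp
  show "2 \<cdot>\<^sub>m (C0 * dX * transpose_mat C0 * (Q0 * E * M0 * transpose_mat (Q0 * E)))
      = 2 \<cdot>\<^sub>m (C0 * dX * (C0 * E)) * transpose_mat (Q0 * E * M0)"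
    by (simp add: normrules d sym CQ')
  show "- (2 \<cdot>\<^sub>m ((Q0 * E * M0 * transpose_mat (Q0 * E)) * C0 * dX * transpose_mat C0))
      = transpose_mat (2 \<cdot>\<^sub>m (C0 * dX * (C0 * E)) * transpose_mat (Q0 * E * M0))"
    apply (simp add: normrules d sym QC' skw)
    apply (rule eq_matI)
    apply (simp_all only: idxrules d)
    done
qed

lemma smat_mult_vec: "A \<in> carrier_mat n m \<Longrightarrow> v \<in> carrier_vec m \<Longrightarrow> (c \<cdot>\<^sub>m A) *\<^sub>v v = c \<cdot>\<^sub>v (A *\<^sub>v (v::real vec))"
  by (rule eq_vecI) (auto simp: scalar_prod_def sum_distrib_left ac_simps)

lemma opb_Ipr: "opb (Ipr p r) 1"
  unfolding opb_def
proof
  fix v :: "real vec" assume "v \<in> carrier_vec (dim_col (Ipr p r))"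
  hence v: "v \<in> carrier_vec r" by (simp add: Ipr_def)
  have e: "(Ipr p r *\<^sub>v v) $ i = (if i < r then v $ i else 0)" if "i < p" for i
  proof -
    have "(Ipr p r *\<^sub>v v) $ i = (\<Sum>k<r. (if i = k then 1 else 0) * v $ k)"
      using that v by (simp add: Ipr_def scalar_prod_def atLeast0LessThan)
    also have "\<dots> = (\<Sum>k<r. if k = i then v $ k else 0)" by (rule sum.cong) auto
    also have "\<dots> = (if i < r then v $ i else 0)" by (simp add: sum.delta')
    finally show ?thesis .
  qed
  have "(vnorm (Ipr p r *\<^sub>v v))^2 = (\<Sum>i<p. (if i < r then v $ i else 0)^2)"
  proof -
    have dimI: "dim_vec (Ipr p r *\<^sub>v v) = p" by (simp add: Ipr_def)
    show ?thesis unfolding vnorm_sq' dimI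
      by (rule sum.cong[OF refl]) (subst e, auto)
  qed
  also have "\<dots> = (\<Sum>i\<in>{..<p} \<inter> {..<r}. (v $ i)^2)"
    by (simp add: sum.inter_restrict if_distrib[of "\<lambda>x. x^2"] cong: if_cong)
  also have "\<dots> \<le> (\<Sum>i<r. (v $ i)^2)" by (rule sum_mono2) auto
  also have "\<dots> = (vnorm v)^2" using v by (simp add: vnorm_sq')
  finally show "vnorm (Ipr p r *\<^sub>v v) \<le> 1 * vnorm v" using power2_le_imp_le by simp
qed

lemma snorm_opb:
  assumes M: "M \<in> carrier_mat n n" and n: "0 < n"
  shows "opb M (snorm M)" "0 \<le> snorm M"
proof -
  let ?S = "{vnorm (M *\<^sub>v x) | x. x \<in> carrier_vec (dim_col M) \<and> vnorm x = 1}"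
  have bdd: "bdd_above ?S"
  proof (rule bdd_aboveI)
    fix y assume "y \<in> ?S"
    then obtain x where x: "y = vnorm (M *\<^sub>v x)" "x \<in> carrier_vec (dim_col M)" "vnorm x = 1" by blast
    show "y \<le> fnorm M" using opbD[OF opb_fnorm[OF M] x(2)] x by simp
  qed
  have e: "unit_vec n 0 \<in> carrier_vec (dim_col M) \<and> vnorm (unit_vec n 0) = 1"
  proof -
    have "(\<Sum>i<n. ((unit_vec n 0 :: real vec) $ i)^2) = (\<Sum>i<n. (if i = 0 then 1 else 0::real))" by (rule sum.cong) auto
    also have "\<dots> = 1" using n by (simp add: sum.delta')
    finally have s1: "(\<Sum>i<n. ((unit_vec n 0 :: real vec) $ i)^2) = 1" .
    have "vnorm (unit_vec n 0) = 1" unfolding vnorm_def using s1 by simp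
    thus ?thesis using M by simp
  qed
  hence ne: "?S \<noteq> {}" by blast
  have mem: "vnorm (M *\<^sub>v x) \<le> snorm M" if "x \<in> carrier_vec (dim_col M)" "vnorm x = 1" for x
    unfolding snorm_def by (rule cSup_upper[OF _ bdd]) (use that in blast)
  show "0 \<le> snorm M" using mem[of "unit_vec n 0"] e vnorm_nonneg order_trans by blast
  show "opb M (snorm M)"
    unfolding opb_def
  proof
    fix v :: "real vec" assume v: "v \<in> carrier_vec (dim_col M)"
    show "vnorm (M *\<^sub>v v) \<le> snorm M * vnorm v"
    proof (cases "vnorm v = 0")
      case True
      hence "v = 0\<^sub>v (dim_col M)" using vnorm_eq0[of v] v by simp
      hence "M *\<^sub>v v = 0\<^sub>v (dim_row M)" by (intro eq_vecI) (auto simp: scalar_prod_def)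
      hence "vnorm (M *\<^sub>v v) = 0" by (simp add: vnorm_def)
      thus ?thesis using True by simp
    next
      case False
      hence pos: "0 < vnorm v" using vnorm_nonneg[of v] by linarith
      let ?x = "(1 / vnorm v) \<cdot>\<^sub>v v"
      have x: "?x \<in> carrier_vec (dim_col M)" "vnorm ?x = 1" using v pos by (auto simp: vnorm_smult)
      have Mc: "M \<in> carrier_mat (dim_row M) (dim_col M)" using M by auto
      have "M *\<^sub>v ?x = (1 / vnorm v) \<cdot>\<^sub>v (M *\<^sub>v v)" using mult_mat_vec[OF Mc v] by simp
      hence "vnorm (M *\<^sub>v ?x) = vnorm (M *\<^sub>v v) / vnorm v" using pos by (simp add: vnorm_smult)
      with mem[OF x] have "vnorm (M *\<^sub>v v) / vnorm v \<le> snorm M" by simp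
      thus ?thesis using pos by (simp add: divide_le_eq mult.commute)
    qed
  qed
qed



lemma one_mult_d: "dim_row (Y::real mat) = n \<Longrightarrow> 1\<^sub>m n * Y = Y"
  by (rule left_mult_one_mat) (auto intro!: carrier_matI)
lemma mult_one_d: "dim_col (Y::real mat) = n \<Longrightarrow> Y * 1\<^sub>m n = Y"
  by (rule right_mult_one_mat) (auto intro!: carrier_matI)

lemma skew_Q:
  assumes X: "skew p X"
  shows "(1\<^sub>m p + X) * minv (1\<^sub>m p - X) = 2 \<cdot>\<^sub>m minv (1\<^sub>m p - X) - 1\<^sub>m p"
proof -
  let ?C = "minv (1\<^sub>m p - X)"
  have Xc: "X \<in> carrier_mat p p" using X unfolding skew_def by auto
  note C = skew_minv[OF X]
  have d: "dim_row X = p" "dim_col X = p" "dim_row ?C = p" "dim_col ?C = p" using Xc C by auto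
  have h: "?C - X * ?C = 1\<^sub>m p" using C(2) mdistr_minus[of "1\<^sub>m p" X ?C] d one_mult_d[of ?C p] by simp
  have "(1\<^sub>m p + X) * ?C = ?C + X * ?C" using mdistr[of "1\<^sub>m p" X ?C] d one_mult_d[of ?C p] by simp
  also have "\<dots> = 2 \<cdot>\<^sub>m ?C - 1\<^sub>m p"
  proof (rule eq_matI)
    fix i j assume ij: "i < dim_row (2 \<cdot>\<^sub>m ?C - 1\<^sub>m p)" "j < dim_col (2 \<cdot>\<^sub>m ?C - 1\<^sub>m p)"
    hence ij': "i < p" "j < p" by auto
    have "(?C - X * ?C) $$ (i,j) = 1\<^sub>m p $$ (i,j)" using h by simp
    hence "?C $$ (i,j) - (X * ?C) $$ (i,j) = 1\<^sub>m p $$ (i,j)" using ij' d by (simp only: idxrules index_one_mat(2,3) d)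
    thus "(?C + X * ?C) $$ (i,j) = (2 \<cdot>\<^sub>m ?C - 1\<^sub>m p) $$ (i,j)"
      using ij' d by (simp only: idxrules index_one_mat(2,3) d)
  qed (use d in auto)
  finally show ?thesis .
qed

lemma resolvent:
  fixes C C0 X X0 :: "real mat"
  assumes c: "C \<in> carrier_mat p p" "C0 \<in> carrier_mat p p" "X \<in> carrier_mat p p" "X0 \<in> carrier_mat p p"
    and h1: "C * (1\<^sub>m p - X) = 1\<^sub>m p" and h2: "(1\<^sub>m p - X0) * C0 = 1\<^sub>m p"
  shows "C - C0 = C * (X - X0) * C0"
proof -
  have d: "dim_row C = p" "dim_col C = p" "dim_row C0 = p" "dim_col C0 = p" "dim_row X = p" "dim_col X = p"
    "dim_row X0 = p" "dim_col X0 = p" using c by auto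
  have "X - X0 = (1\<^sub>m p - X0) - (1\<^sub>m p - X)" by (rule eq_matI) (use d in auto)
  hence "C * (X - X0) * C0 = (C * (1\<^sub>m p - X0) - C * (1\<^sub>m p - X)) * C0"
    using mdistl_minus[of C "1\<^sub>m p - X0" "1\<^sub>m p - X"] d by simp
  also have "\<dots> = C * (1\<^sub>m p - X0) * C0 - C * (1\<^sub>m p - X) * C0"
    by (rule mdistr_minus) (use d in auto)
  also have "C * (1\<^sub>m p - X0) * C0 = C * ((1\<^sub>m p - X0) * C0)" by (rule massoc) (use d in auto)
  also have "\<dots> = C" using h2 mult_one_d[of C p] d by simp
  also have "C * (1\<^sub>m p - X) * C0 = C0" using h1 one_mult_d[of C0 p] d by simp
  finally show ?thesis by simp
qed


theorem theorem3:
  fixes p r :: nat and A A0 :: "real mat" and \<mu> \<mu>0 :: "real vec"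
  assumes "1 \<le> r" and "r \<le> p"
    and "inD p r A \<mu>" and "inD p r A0 \<mu>0"
  shows "\<exists>R \<in> carrier_mat p p.
    vecm (Sigma p r A \<mu> - Sigma p r A0 \<mu>0)
      = DSigma p r A0 \<mu>0 *\<^sub>v (theta A \<mu> - theta A0 \<mu>0) + vecm R
    \<and> fnorm R \<le> 16 * (1 + snorm (Mmu r \<mu>0)) * (vnorm (theta A \<mu> - theta A0 \<mu>0))^2
    \<and> (let C0 = minv (1\<^sub>m p - Xphi p r A0); S0 = Sigma p r A0 \<mu>0; U0 = Ucay p r A0;
           dX = Xphi p r A - Xphi p r A0 in
       Sigma p r A \<mu> - S0
         = 2 \<cdot>\<^sub>m (C0 * dX * transpose_mat C0 * S0) - 2 \<cdot>\<^sub>m (S0 * C0 * dX * transpose_mat C0)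
           + U0 * (Mmu r \<mu> - Mmu r \<mu>0) * transpose_mat U0 + R)"
proof -
  have r1: "1 \<le> r" and rp: "r \<le> p" using assms by auto
  let ?n = "r * (r + 1) div 2"
  have A: "A \<in> carrier_mat (p-r) r" and A0: "A0 \<in> carrier_mat (p-r) r"
    and mu: "\<mu> \<in> carrier_vec ?n" and mu0: "\<mu>0 \<in> carrier_vec ?n"
    using assms(3,4) unfolding inD_def by auto
  define E where "E = Ipr p r"
  define X where "X = Xphi p r A"
  define X0 where "X0 = Xphi p r A0"
  define dX where "dX = X - X0"
  have Xs: "skew p X" unfolding X_def by (rule Xphi_skew[OF A rp])
  have X0s: "skew p X0" unfolding X0_def by (rule Xphi_skew[OF A0 rp])
  have dXeq: "dX = Xphi p r (A - A0)" unfolding dX_def X_def X0_def by (rule Xphi_minus[OF A A0 rp])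
  have AA: "A - A0 \<in> carrier_mat (p-r) r" using A A0 by simp
  have dXs: "skew p dX" unfolding dXeq by (rule Xphi_skew[OF AA rp])
  have Xc: "X \<in> carrier_mat p p" and X0c: "X0 \<in> carrier_mat p p" and dXc: "dX \<in> carrier_mat p p"
    using Xs X0s dXs unfolding skew_def by auto
  define C where "C = minv (1\<^sub>m p - X)"
  define C0 where "C0 = minv (1\<^sub>m p - X0)"
  note Cm = skew_minv[OF Xs, folded C_def]
  note C0m = skew_minv[OF X0s, folded C0_def]
  have Cc: "C \<in> carrier_mat p p" and C0c: "C0 \<in> carrier_mat p p" using Cm C0m by auto
  define Q where "Q = (1\<^sub>m p + X) * C"
  define Q0 where "Q0 = (1\<^sub>m p + X0) * C0"
  have Qc: "Q \<in> carrier_mat p p" and Q0c: "Q0 \<in> carrier_mat p p" using Cc C0c Xc X0c unfolding Q_def Q0_def by auto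
  have Ec: "E \<in> carrier_mat p r" unfolding E_def by (rule Ipr_carrier)
  have UcayA: "Ucay p r A = Q * E" unfolding Ucay_def Q_def E_def C_def X_def ..
  have UcayA0: "Ucay p r A0 = Q0 * E" unfolding Ucay_def Q0_def E_def C0_def X0_def ..
  define M where "M = Mof r \<mu>"
  define M0 where "M0 = Mof r \<mu>0"
  define DM where "DM = Mof r (\<mu> - \<mu>0)"
  have MmuA: "Mmu r \<mu> = M" unfolding M_def by (rule Mmu_eq[OF mu])
  have MmuA0: "Mmu r \<mu>0 = M0" unfolding M0_def by (rule Mmu_eq[OF mu0])
  have MM: "M - M0 = DM" unfolding M_def M0_def DM_def by (rule Mof_minus[OF mu mu0])
  have M0s: "symm r M0" unfolding M0_def by (rule Mof_symm)
  have Mc: "M \<in> carrier_mat r r" and M0c: "M0 \<in> carrier_mat r r" and DMc: "DM \<in> carrier_mat r r"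
    using Mof_symm unfolding symm_def M_def M0_def DM_def by auto
  have M0T: "transpose_mat M0 = M0" using M0s unfolding symm_def by auto
  define U where "U = Q * E"
  define U0 where "U0 = Q0 * E"
  have Uc: "U \<in> carrier_mat p r" and U0c: "U0 \<in> carrier_mat p r" unfolding U_def U0_def using Qc Q0c Ec by auto
  define S where "S = U * M * transpose_mat U"
  define S0 where "S0 = U0 * M0 * transpose_mat U0"
  have SigA: "Sigma p r A \<mu> = S" unfolding Sigma_def S_def UcayA MmuA U_def ..
  have SigA0: "Sigma p r A0 \<mu>0 = S0" unfolding Sigma_def S0_def UcayA0 MmuA0 U0_def ..
  have Sc: "S \<in> carrier_mat p p" and S0c: "S0 \<in> carrier_mat p p" unfolding S_def S0_def using Uc U0c Mc M0c by auto
  define L where "L = 2 \<cdot>\<^sub>m (C0 * dX * transpose_mat C0 * S0) - 2 \<cdot>\<^sub>m (S0 * C0 * dX * transpose_mat C0)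
           + U0 * DM * transpose_mat U0"
  have Lc: "L \<in> carrier_mat p p" unfolding L_def using U0c DMc by auto
  define R where "R = (S - S0) - L"
  have Rc: "R \<in> carrier_mat p p" unfolding R_def using Lc by auto
  define V where "V = C0 * dX * (C0 * E)"
  define W where "W = 2 \<cdot>\<^sub>m V * transpose_mat (U0 * M0)"
  have Vc: "V \<in> carrier_mat p r" unfolding V_def using C0c dXc Ec by auto
  have Wc: "W \<in> carrier_mat p p" unfolding W_def using Vc U0c M0c by auto
  have CQ0: "transpose_mat C0 * Q0 = C0"
  proof -
    have "transpose_mat C0 * Q0 = (transpose_mat C0 * (1\<^sub>m p + X0)) * C0"
      unfolding Q0_def by (rule massoc[symmetric]) (use C0c X0c in auto)
    also have "\<dots> = C0" using skew_CT(1)[OF X0s, folded C0_def] C0c by simp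
    finally show ?thesis .
  qed
  have dXT: "transpose_mat dX = - dX" using dXs unfolding skew_def by auto
  note lin = lin_identity[OF C0c Q0c dXc Ec M0c M0T CQ0 dXT, folded U0_def, folded S0_def V_def]
  have Lid: "L = W + transpose_mat W + U0 * DM * transpose_mat U0"
  proof -
    have a: "2 \<cdot>\<^sub>m (C0 * dX * transpose_mat C0 * S0) = W" using lin(1) unfolding W_def .
    have b: "- (2 \<cdot>\<^sub>m (S0 * C0 * dX * transpose_mat C0)) = transpose_mat W" using lin(2) unfolding W_def .
    have d: "dim_row C0 = p" "dim_col C0 = p" "dim_row dX = p" "dim_col dX = p" "dim_row S0 = p" "dim_col S0 = p"
      "dim_row U0 = p" "dim_col U0 = r" "dim_row DM = r" "dim_col DM = r" using C0c dXc S0c U0c DMc by auto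
    have "L = 2 \<cdot>\<^sub>m (C0 * dX * transpose_mat C0 * S0) + (- (2 \<cdot>\<^sub>m (S0 * C0 * dX * transpose_mat C0)))
           + U0 * DM * transpose_mat U0" unfolding L_def
      apply (rule eq_matI)
      apply (simp_all only: idxrules d)
      done
    thus ?thesis by (simp only: a b)
  qed
  have vecL: "vecm L = DSigma p r A0 \<mu>0 *\<^sub>v (theta A \<mu> - theta A0 \<mu>0)"
  proof -
    have th: "theta A \<mu> - theta A0 \<mu>0 = vecm (A - A0) @\<^sub>v (\<mu> - \<mu>0)"
      using theta_minus[OF A A0 mu mu0] vecm_minus[OF A A0] by simp
    have Kc: "commut p p \<in> carrier_mat (p*p) (p*p)" by (simp add: commut_def)
    have Gc: "Gam p r \<in> carrier_mat (p*p) (r*(p-r))"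
      unfolding Gam_def using Kc by (auto simp: kron_def)
    have k1c: "kron (transpose_mat E * transpose_mat C0) C0 \<in> carrier_mat (r*p) (p*p)"
      using Ec C0c by (auto simp: kron_def)
    have DUeq: "DU p r A0 = 2 \<cdot>\<^sub>m (kron (transpose_mat E * transpose_mat C0) C0 * Gam p r)"
      unfolding DU_def E_def C0_def X0_def ..
    have DUc: "DU p r A0 \<in> carrier_mat (r*p) (r*(p-r))" unfolding DUeq using k1c Gc by auto
    have k2c: "kron (U0 * M0) (1\<^sub>m p) \<in> carrier_mat (p*p) (r*p)" using U0c M0c by (auto simp: kron_def)
    have Dphieq: "DphiSigma p r A0 \<mu>0 = (1\<^sub>m (p*p) + commut p p) * kron (U0 * M0) (1\<^sub>m p) * DU p r A0"
      unfolding DphiSigma_def UcayA0 MmuA0 U0_def ..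
    have Dphic: "DphiSigma p r A0 \<mu>0 \<in> carrier_mat (p*p) ((p-r)*r)"
      unfolding Dphieq using Kc k2c DUc by (auto simp: mult.commute)
    have kUc: "kron U0 U0 \<in> carrier_mat (p*p) (r*r)" using U0c by (auto simp: kron_def)
    have Dmc: "Dm r \<in> carrier_mat (r*r) ?n" by (simp add: Dm_def)
    have Dmueq: "DmuSigma p r A0 = kron U0 U0 * Dm r"
      unfolding DmuSigma_def UcayA0 dupl_eq U0_def ..
    have Dmuc: "DmuSigma p r A0 \<in> carrier_mat (p*p) ?n" unfolding Dmueq using kUc Dmc by auto
    have vA: "vecm (A - A0) \<in> carrier_vec ((p-r)*r)" using AA by simp
    have vA': "vecm (A - A0) \<in> carrier_vec (r*(p-r))" using AA vecm_carrier[OF AA] by (simp add: mult.commute)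
    have vmu: "\<mu> - \<mu>0 \<in> carrier_vec ?n" using mu mu0 by simp
    have "DSigma p r A0 \<mu>0 *\<^sub>v (theta A \<mu> - theta A0 \<mu>0)
        = DphiSigma p r A0 \<mu>0 *\<^sub>v vecm (A - A0) + DmuSigma p r A0 *\<^sub>v (\<mu> - \<mu>0)"
      unfolding DSigma_def th by (rule hcat_mult[OF Dphic Dmuc vA vmu])
    also have "DmuSigma p r A0 *\<^sub>v (\<mu> - \<mu>0) = vecm (U0 * DM * transpose_mat U0)"
    proof -
      have e1: "DmuSigma p r A0 *\<^sub>v (\<mu> - \<mu>0) = kron U0 U0 *\<^sub>v (Dm r *\<^sub>v (\<mu> - \<mu>0))"
        unfolding Dmueq by (rule assoc_mult_mat_vec[OF kUc Dmc vmu])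
      have e2: "\<mu> - \<mu>0 = vech DM" unfolding DM_def by (rule Mof_vech[OF vmu, symmetric])
      have e3: "Dm r *\<^sub>v vech DM = vecm DM" unfolding DM_def by (rule Dm_prop[OF Mof_symm, symmetric])
      have e4: "kron U0 U0 *\<^sub>v vecm DM = vecm (U0 * DM * transpose_mat U0)" by (rule kron_vecm[OF U0c U0c DMc])
      show ?thesis by (simp only: e1) (simp only: e2 e3 e4)
    qed
    also have "DphiSigma p r A0 \<mu>0 *\<^sub>v vecm (A - A0) = vecm W + vecm (transpose_mat W)"
    proof -
      have g: "Gam p r *\<^sub>v vecm (A - A0) = vecm dX" unfolding dXeq by (rule Gam_vecm[OF AA rp])
      have k1: "kron (transpose_mat E * transpose_mat C0) C0 *\<^sub>v vecm dX = vecm V"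
      proof -
        have Pc: "transpose_mat E * transpose_mat C0 \<in> carrier_mat r p" using Ec C0c by auto
        have "kron (transpose_mat E * transpose_mat C0) C0 *\<^sub>v vecm dX
            = vecm (C0 * dX * transpose_mat (transpose_mat E * transpose_mat C0))"
          by (rule kron_vecm[OF Pc C0c dXc])
        also have "transpose_mat (transpose_mat E * transpose_mat C0) = C0 * E"
          using transpose_mult[of "transpose_mat E" r p "transpose_mat C0" p] Ec C0c by simp
        finally show ?thesis unfolding V_def .
      qed
      have du: "DU p r A0 *\<^sub>v vecm (A - A0) = vecm (2 \<cdot>\<^sub>m V)"
      proof -
        have "DU p r A0 *\<^sub>v vecm (A - A0) = 2 \<cdot>\<^sub>v ((kron (transpose_mat E * transpose_mat C0) C0 * Gam p r) *\<^sub>v vecm (A - A0))"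
          unfolding DUeq by (rule smat_mult_vec[OF _ vA']) (use k1c Gc in auto)
        also have "(kron (transpose_mat E * transpose_mat C0) C0 * Gam p r) *\<^sub>v vecm (A - A0)
            = kron (transpose_mat E * transpose_mat C0) C0 *\<^sub>v (Gam p r *\<^sub>v vecm (A - A0))"
          by (rule assoc_mult_mat_vec[OF k1c Gc vA'])
        finally show ?thesis unfolding g k1 vecm_smult .
      qed
      have k2: "kron (U0 * M0) (1\<^sub>m p) *\<^sub>v vecm (2 \<cdot>\<^sub>m V) = vecm W"
      proof -
        have "kron (U0 * M0) (1\<^sub>m p) *\<^sub>v vecm (2 \<cdot>\<^sub>m V) = vecm (1\<^sub>m p * (2 \<cdot>\<^sub>m V) * transpose_mat (U0 * M0))"
          by (rule kron_vecm) (use U0c M0c Vc in auto)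
        also have "1\<^sub>m p * (2 \<cdot>\<^sub>m V) = 2 \<cdot>\<^sub>m V" using Vc by simp
        finally show ?thesis unfolding W_def .
      qed
      have vW: "vecm W \<in> carrier_vec (p*p)" using Wc by simp
      have "DphiSigma p r A0 \<mu>0 *\<^sub>v vecm (A - A0)
          = (1\<^sub>m (p*p) + commut p p) *\<^sub>v (kron (U0 * M0) (1\<^sub>m p) *\<^sub>v (DU p r A0 *\<^sub>v vecm (A - A0)))"
      proof -
        have Pc: "(1\<^sub>m (p*p) + commut p p) \<in> carrier_mat (p*p) (p*p)" using Kc by simp
        have w: "DU p r A0 *\<^sub>v vecm (A - A0) \<in> carrier_vec (r*p)" using DUc vA' by simp
        have "(1\<^sub>m (p*p) + commut p p) * kron (U0 * M0) (1\<^sub>m p) * DU p r A0 *\<^sub>v vecm (A - A0)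
          = ((1\<^sub>m (p*p) + commut p p) * kron (U0 * M0) (1\<^sub>m p)) *\<^sub>v (DU p r A0 *\<^sub>v vecm (A - A0))"
          by (rule assoc_mult_mat_vec[OF mult_carrier_mat[OF Pc k2c] DUc vA'])
        also have "\<dots> = (1\<^sub>m (p*p) + commut p p) *\<^sub>v (kron (U0 * M0) (1\<^sub>m p) *\<^sub>v (DU p r A0 *\<^sub>v vecm (A - A0)))"
          by (rule assoc_mult_mat_vec[OF Pc k2c w])
        finally show ?thesis unfolding Dphieq .
      qed
      also have "\<dots> = (1\<^sub>m (p*p) + commut p p) *\<^sub>v vecm W" unfolding du k2 ..
      also have "\<dots> = vecm W + commut p p *\<^sub>v vecm W"
        using add_mult_distrib_mat_vec[OF _ Kc vW] vW by simp
      also have "commut p p *\<^sub>v vecm W = vecm (transpose_mat W)" by (rule commut_vecm[OF Wc])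
      finally show ?thesis .
    qed
    also have "vecm W + vecm (transpose_mat W) + vecm (U0 * DM * transpose_mat U0) = vecm L"
    proof -
      have "vecm L = vecm (W + transpose_mat W) + vecm (U0 * DM * transpose_mat U0)"
        unfolding Lid by (rule vecm_add) (use Wc U0c DMc in auto)
      also have "vecm (W + transpose_mat W) = vecm W + vecm (transpose_mat W)"
        by (rule vecm_add) (use Wc in auto)
      finally show ?thesis by simp
    qed
    finally show ?thesis by simp
  qed
  have part1: "vecm (Sigma p r A \<mu> - Sigma p r A0 \<mu>0)
      = DSigma p r A0 \<mu>0 *\<^sub>v (theta A \<mu> - theta A0 \<mu>0) + vecm R"
  proof -
    have "S - S0 = L + R" unfolding R_def by (rule eq_matI) (use Sc S0c Lc in auto)
    hence "vecm (S - S0) = vecm L + vecm R" using vecm_add[OF Lc Rc] by simp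
    thus ?thesis unfolding SigA SigA0 vecL .
  qed
  have part3: "(let C0 = minv (1\<^sub>m p - Xphi p r A0); S0 = Sigma p r A0 \<mu>0; U0 = Ucay p r A0;
           dX = Xphi p r A - Xphi p r A0 in
       Sigma p r A \<mu> - S0
         = 2 \<cdot>\<^sub>m (C0 * dX * transpose_mat C0 * S0) - 2 \<cdot>\<^sub>m (S0 * C0 * dX * transpose_mat C0)
           + U0 * (Mmu r \<mu> - Mmu r \<mu>0) * transpose_mat U0 + R)"
  proof -
    have "S - S0 = L + R" unfolding R_def by (rule eq_matI) (use Sc S0c Lc in auto)
    thus ?thesis unfolding Let_def SigA SigA0 C0_def[symmetric] X_def[symmetric] X0_def[symmetric]
      dX_def[symmetric] UcayA0 U0_def[symmetric] MmuA MmuA0 MM L_def .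
  qed
  have part2: "fnorm R \<le> 16 * (1 + snorm (Mmu r \<mu>0)) * (vnorm (theta A \<mu> - theta A0 \<mu>0))^2"
  proof -
    have d: "dim_row C = p" "dim_col C = p" "dim_row C0 = p" "dim_col C0 = p" "dim_row dX = p" "dim_col dX = p"
      "dim_row E = p" "dim_col E = r" "dim_row Q = p" "dim_col Q = p" "dim_row Q0 = p" "dim_col Q0 = p"
      "dim_row M0 = r" "dim_col M0 = r" "dim_row DM = r" "dim_col DM = r"
      "dim_row U = p" "dim_col U = r" "dim_row U0 = p" "dim_col U0 = r"
      using Cc C0c dXc Ec Qc Q0c M0c DMc Uc U0c by auto
    have oC: "opb C 1" unfolding C_def by (rule skew_C_opb[OF Xs])
    have oC0: "opb C0 1" unfolding C0_def by (rule skew_C_opb[OF X0s])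
    have oQ: "opb Q 1" unfolding Q_def C_def by (rule skew_Q_opb[OF Xs])
    have oQ0: "opb Q0 1" unfolding Q0_def C0_def by (rule skew_Q_opb[OF X0s])
    have oE: "opb E 1" unfolding E_def by (rule opb_Ipr)
    have oU: "opb U 1" using opb_mult[OF Qc Ec oQ oE] unfolding U_def by simp
    have oU0: "opb U0 1" using opb_mult[OF Q0c Ec oQ0 oE] unfolding U0_def by simp
    have oUT: "opb (transpose_mat U) 1" by (rule opb_transpose[OF Uc oU]) simp
    have oU0T: "opb (transpose_mat U0) 1" by (rule opb_transpose[OF U0c oU0]) simp
    define m where "m = snorm M0"
    have r0: "0 < r" using r1 by simp
    have oM0: "opb M0 m" and m0: "0 \<le> m" unfolding m_def using snorm_opb[OF M0c r0] by auto
    have oC0E: "opb (C0 * E) 1" using opb_mult[OF C0c Ec oC0 oE] by simp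
    define fd where "fd = fnorm dX"
    define fdm where "fdm = fnorm DM"
    have fd0: "0 \<le> fd" and fdm0: "0 \<le> fdm" unfolding fd_def fdm_def by auto
    have odX: "opb dX fd" unfolding fd_def by (rule opb_fnorm[OF dXc])
    have oDM: "opb DM fdm" unfolding fdm_def by (rule opb_fnorm[OF DMc])
    define G where "G = U - U0"
    define Z where "Z = G - 2 \<cdot>\<^sub>m V"
    have Gc: "G \<in> carrier_mat p r" and Zc: "Z \<in> carrier_mat p r" unfolding G_def Z_def using Uc U0c Vc by auto
    have dG: "dim_row G = p" "dim_col G = r" "dim_row Z = p" "dim_col Z = r" using Gc Zc by auto
    have CC0: "C - C0 = C * dX * C0"
      unfolding dX_def by (rule resolvent[OF Cc C0c Xc X0c Cm(3) C0m(2)])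
    have QQ0: "Q - Q0 = 2 \<cdot>\<^sub>m (C - C0)"
    proof -
      have q1: "Q = 2 \<cdot>\<^sub>m C - 1\<^sub>m p" unfolding Q_def C_def by (rule skew_Q[OF Xs])
      have q2: "Q0 = 2 \<cdot>\<^sub>m C0 - 1\<^sub>m p" unfolding Q0_def C0_def by (rule skew_Q[OF X0s])
      show ?thesis unfolding q1 q2 by (rule eq_matI) (use Cc C0c in auto)
    qed
    have Geq: "G = 2 \<cdot>\<^sub>m (C * dX * C0 * E)"
    proof -
      have "G = (Q - Q0) * E" unfolding G_def U_def U0_def by (rule mdistr_minus[symmetric]) (use d in auto)
      also have "\<dots> = 2 \<cdot>\<^sub>m (C * dX * C0) * E" unfolding QQ0 CC0 ..
      also have "\<dots> = 2 \<cdot>\<^sub>m (C * dX * C0 * E)" by (rule msmultl) (use d in simp)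
      finally show ?thesis .
    qed
    have Zeq: "Z = 2 \<cdot>\<^sub>m ((C * dX * C0) * (dX * (C0 * E)))"
    proof -
      have "Z = 2 \<cdot>\<^sub>m ((C - C0) * (dX * (C0 * E)))"
        unfolding Z_def Geq V_def
        apply (simp add: normrules d)
        apply (rule eq_matI)
        apply (simp_all only: idxrules d right_diff_distrib)
        done
      thus ?thesis unfolding CC0 .
    qed
    have fG: "fnorm G \<le> 2 * fd"
    proof -
      have "fnorm (C * dX) \<le> 1 * fnorm dX" by (rule fnorm_mult_left[OF Cc dXc oC]) simp
      moreover have "fnorm (C * dX * C0) \<le> fnorm (C * dX) * 1" by (rule fnorm_mult_right[OF _ C0c oC0]) (use Cc dXc in auto)
      moreover have "fnorm (C * dX * C0 * E) \<le> fnorm (C * dX * C0) * 1" by (rule fnorm_mult_right[OF _ Ec oE]) (use Cc dXc C0c in auto)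
      ultimately have "fnorm (C * dX * C0 * E) \<le> fd" unfolding fd_def by simp
      thus ?thesis unfolding Geq fnorm_smult by simp
    qed
    have fZ: "fnorm Z \<le> 2 * (fd * fd)"
    proof -
      have o1: "opb (C * dX) (1 * fd)" by (rule opb_mult[OF Cc dXc oC odX]) simp
      have o2: "opb (C * dX * C0) (1 * fd * 1)" by (rule opb_mult[OF _ C0c o1 oC0]) (use Cc dXc fd0 in auto)
      have "fnorm ((C * dX * C0) * (dX * (C0 * E))) \<le> (1 * fd * 1) * fnorm (dX * (C0 * E))"
        by (rule fnorm_mult_left[OF _ _ o2]) (use Cc dXc C0c Ec fd0 in auto)
      moreover have "fnorm (dX * (C0 * E)) \<le> fd * 1" unfolding fd_def
        by (rule fnorm_mult_right[OF dXc _ oC0E]) (use C0c Ec in auto)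
      ultimately have "fnorm ((C * dX * C0) * (dX * (C0 * E))) \<le> fd * fd"
        using fd0 by (smt (verit) mult_left_mono)
      thus ?thesis unfolding Zeq fnorm_smult by simp
    qed
    have UG: "U0 + G = U" unfolding G_def by (rule eq_matI) (use Uc U0c in auto)
    have MD: "M0 + DM = M" unfolding MM[symmetric] by (rule eq_matI) (use Mc M0c in auto)
    have GZ: "G - Z = 2 \<cdot>\<^sub>m V" unfolding Z_def by (rule eq_matI) (use Gc Vc in auto)
    have Rform: "R = Z * M0 * transpose_mat U0 + U0 * M0 * transpose_mat Z + G * M0 * transpose_mat G
     + G * DM * transpose_mat U + U0 * DM * transpose_mat G"
    proof -
      note ci = core_identity[OF U0c Gc Zc M0c DMc M0T]
      have "R = (U0 + G) * (M0 + DM) * transpose_mat (U0 + G) - U0 * M0 * transpose_mat U0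
     - ((G - Z) * transpose_mat (U0 * M0) + transpose_mat ((G - Z) * transpose_mat (U0 * M0)) + U0 * DM * transpose_mat U0)"
        unfolding UG MD GZ R_def Lid W_def S_def S0_def ..
      also have "\<dots> = Z * M0 * transpose_mat U0 + U0 * M0 * transpose_mat Z + G * M0 * transpose_mat G
     + G * DM * transpose_mat (U0 + G) + U0 * DM * transpose_mat G" by (rule ci)
      finally show ?thesis unfolding UG .
    qed
    have t1: "fnorm (Z * M0 * transpose_mat U0) \<le> fnorm Z * m"
    proof -
      have "fnorm (Z * M0) \<le> fnorm Z * m" by (rule fnorm_mult_right[OF Zc M0c oM0 m0])
      moreover have "fnorm (Z * M0 * transpose_mat U0) \<le> fnorm (Z * M0) * 1"
        by (rule fnorm_mult_right[OF _ _ oU0T]) (use Zc M0c U0c in auto)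
      ultimately show ?thesis by simp
    qed
    have t2: "fnorm (U0 * M0 * transpose_mat Z) \<le> m * fnorm Z"
    proof -
      have o: "opb (U0 * M0) (1 * m)" by (rule opb_mult[OF U0c M0c oU0 oM0]) simp
      have "fnorm (U0 * M0 * transpose_mat Z) \<le> (1 * m) * fnorm (transpose_mat Z)"
        by (rule fnorm_mult_left[OF _ _ o]) (use U0c M0c Zc m0 in auto)
      thus ?thesis by (simp add: fnorm_transpose)
    qed
    have oGT: "opb (transpose_mat G) (fnorm G)" by (rule opb_transpose[OF Gc opb_fnorm[OF Gc]]) simp
    have t3: "fnorm (G * M0 * transpose_mat G) \<le> fnorm G * m * fnorm G"
    proof -
      have "fnorm (G * M0) \<le> fnorm G * m" by (rule fnorm_mult_right[OF Gc M0c oM0 m0])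
      moreover have "fnorm (G * M0 * transpose_mat G) \<le> fnorm (G * M0) * fnorm G"
        by (rule fnorm_mult_right[OF _ _ oGT]) (use Gc M0c in auto)
      ultimately show ?thesis by (smt (verit) fnorm_nonneg mult_right_mono)
    qed
    have t4: "fnorm (G * DM * transpose_mat U) \<le> fnorm G * fdm"
    proof -
      have "fnorm (G * DM) \<le> fnorm G * fdm" by (rule fnorm_mult_right[OF Gc DMc oDM fdm0])
      moreover have "fnorm (G * DM * transpose_mat U) \<le> fnorm (G * DM) * 1"
        by (rule fnorm_mult_right[OF _ _ oUT]) (use Gc DMc Uc in auto)
      ultimately show ?thesis by simp
    qed
    have t5: "fnorm (U0 * DM * transpose_mat G) \<le> fdm * fnorm G"
    proof -
      have "fnorm (U0 * DM) \<le> 1 * fnorm DM" by (rule fnorm_mult_left[OF U0c DMc oU0]) simp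
      moreover have "fnorm (U0 * DM * transpose_mat G) \<le> fnorm (U0 * DM) * fnorm G"
        by (rule fnorm_mult_right[OF _ _ oGT]) (use Gc DMc U0c in auto)
      ultimately show ?thesis unfolding fdm_def by (smt (verit) fnorm_nonneg mult_right_mono)
    qed
    have fR: "fnorm R \<le> fnorm Z * m + m * fnorm Z + fnorm G * m * fnorm G + fnorm G * fdm + fdm * fnorm G"
    proof -
      have c1: "Z * M0 * transpose_mat U0 \<in> carrier_mat p p" using Zc M0c U0c by auto
      have c2: "U0 * M0 * transpose_mat Z \<in> carrier_mat p p" using Zc M0c U0c by auto
      have c3: "G * M0 * transpose_mat G \<in> carrier_mat p p" using Gc M0c by auto
      have c4: "G * DM * transpose_mat U \<in> carrier_mat p p" using Gc DMc Uc by auto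
      have c5: "U0 * DM * transpose_mat G \<in> carrier_mat p p" using Gc DMc U0c by auto
      have "fnorm R \<le> fnorm (Z * M0 * transpose_mat U0 + U0 * M0 * transpose_mat Z + G * M0 * transpose_mat G
          + G * DM * transpose_mat U) + fnorm (U0 * DM * transpose_mat G)"
        unfolding Rform by (rule fnorm_add_le) (use c1 c2 c3 c4 c5 in auto)
      also have "fnorm (Z * M0 * transpose_mat U0 + U0 * M0 * transpose_mat Z + G * M0 * transpose_mat G
          + G * DM * transpose_mat U) \<le> fnorm (Z * M0 * transpose_mat U0 + U0 * M0 * transpose_mat Z + G * M0 * transpose_mat G)
          + fnorm (G * DM * transpose_mat U)"
        by (rule fnorm_add_le) (use c1 c2 c3 c4 c5 in auto)
      also have "fnorm (Z * M0 * transpose_mat U0 + U0 * M0 * transpose_mat Z + G * M0 * transpose_mat G)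
          \<le> fnorm (Z * M0 * transpose_mat U0 + U0 * M0 * transpose_mat Z) + fnorm (G * M0 * transpose_mat G)"
        by (rule fnorm_add_le) (use c1 c2 c3 in auto)
      also have "fnorm (Z * M0 * transpose_mat U0 + U0 * M0 * transpose_mat Z)
          \<le> fnorm (Z * M0 * transpose_mat U0) + fnorm (U0 * M0 * transpose_mat Z)"
        by (rule fnorm_add_le) (use c1 c2 in auto)
      finally show ?thesis using t1 t2 t3 t4 t5 by linarith
    qed
    define a where "a = fnorm (A - A0)"
    define b where "b = vnorm (\<mu> - \<mu>0)"
    have vmu: "\<mu> - \<mu>0 \<in> carrier_vec ?n" using mu mu0 by simp
    have fda: "fd^2 = 2 * a^2" unfolding fd_def a_def dXeq by (rule fnorm_Xphi[OF AA rp])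
    have fdmb: "fdm^2 \<le> 2 * b^2" unfolding fdm_def b_def DM_def by (rule fnorm_Mof[OF vmu])
    have th: "theta A \<mu> - theta A0 \<mu>0 = vecm (A - A0) @\<^sub>v (\<mu> - \<mu>0)"
      using theta_minus[OF A A0 mu mu0] vecm_minus[OF A A0] by simp
    have nth: "(vnorm (theta A \<mu> - theta A0 \<mu>0))^2 = a^2 + b^2"
      unfolding th vnorm_append_sq a_def b_def fnorm_vecm ..
    have sn: "snorm (Mmu r \<mu>0) = m" unfolding MmuA0 m_def ..
    let ?g = "fnorm G" and ?z = "fnorm Z"
    have g0: "0 \<le> ?g" by simp
    have s1a: "m * ?z \<le> m * (2 * (fd * fd))" by (rule mult_left_mono[OF fZ m0])
    have s1: "?z * m + m * ?z \<le> 4 * fd^2 * m" using s1a by (simp add: power2_eq_square ac_simps)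
    have gga: "?g * ?g \<le> (2 * fd) * (2 * fd)" by (rule mult_mono[OF fG fG]) (use fd0 in auto)
    have gg: "?g * ?g \<le> 4 * fd^2" using gga by (simp add: power2_eq_square)
    have s2a: "(?g * ?g) * m \<le> (4 * fd^2) * m" by (rule mult_right_mono[OF gg m0])
    have s2: "?g * m * ?g \<le> 4 * fd^2 * m" using s2a by (simp add: ac_simps)
    have s3a: "?g * fdm \<le> (2 * fd) * fdm" by (rule mult_right_mono[OF fG fdm0])
    have s3: "?g * fdm + fdm * ?g \<le> 4 * fd * fdm" using s3a by (simp add: ac_simps)
    have s4a: "0 \<le> (fd - fdm)^2" by simp
    have s4: "4 * fd * fdm \<le> 2 * fd^2 + 2 * fdm^2" using s4a by (simp add: power2_eq_square algebra_simps)
    have "fnorm R \<le> 8 * fd^2 * m + 2 * fd^2 + 2 * fdm^2" using fR s1 s2 s3 s4 by linarith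
    also have "\<dots> \<le> 16 * a^2 * m + 4 * a^2 + 4 * b^2" using fda fdmb by simp
    also have "\<dots> \<le> 16 * (1 + m) * (a^2 + b^2)"
    proof -
      have "0 \<le> 16 * b^2 * m" using m0 by simp
      thus ?thesis by (simp add: algebra_simps)
    qed
    finally show ?thesis unfolding sn nth .
  qed
  show ?thesis using Rc part1 part2 part3 by blast
qed


end
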